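(* Suppose Assumption A holds with $\beta,\gamma\in(0,\infty)$ and the noise satisfies Assumption B. Let $$\theta=\frac{\mu^2\gamma\rho^2(\gamma+2\beta)+8L^2}{2\mu\gamma\rho^2},\qquad\kappa=\frac{\mu\gamma}{2},$$ and run MD-SP with noisy feedback and learning rates $\eta_t=1/(\kappa t+2\theta)$ from an arbitrary $\pi^0\in\mathcal X$. Then for all $t\ge0$, $$\mathbb E[D_\psi(\pi^{\mu,\sigma},\pi^{t+1})]\le\frac{2\theta-\kappa}{\kappa t+2\theta}D_\psi(\pi^{\mu,\sigma},\pi^0)+\frac{NC^2}{\rho(\kappa t+2\theta)}\Big(\frac1\kappa\log\Big(\frac\kappa{2\theta}t+1\Big)+\frac1{2\theta}\Big).$$
   Context: Game. Let $N\ge1$. For each $i\in[N]$, $\mathcal X_i\subseteq\mathbb R^{d_i}$ is a nonempty compact convex set, and $\mathcal X=\prod_i\mathcal X_i$. Each $v_i:\mathcal X\to\mathbb R$ is differentiable, with block gradient $\nabla_{\pi_i}v_i$. The norm is Euclidean, with $\|\pi\|^2=\sum_i\|\pi_i\|^2$. The game is monotone: $\sum_i\langle\nabla_{\pi_i}v_i(\pi)-\nabla_{\pi_i}v_i(\pi'),\pi_i-\pi_i'\rangle\le0$. The game is $L$-smooth: $\sum_i\|\nabla_{\pi_i}v_i(\pi)-\nabla_{\pi_i}v_i(\pi')\|^2\le L^2\|\pi-\pi'\|^2$. Regularizer. $\psi:\mathcal X_i\to\mathbb R$ is differentiable on $\mathcal X_i$ and $\rho$-strongly convex with respect to $\|\cdot\|$.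 Bregman divergence: $D_\psi(x,y)=\psi(x)-\psi(y)-\langle\nabla\psi(y),x-y\rangle$, and $D_\psi(\pi,\pi')=\sum_iD_\psi(\pi_i,\pi_i')$. Perturbation. $G:\mathcal X_i\times\mathcal X_i\to[0,\infty)$ is differentiable in its first argument, with gradient $\nabla_{\pi_i}G$ in that argument. $G(\cdot,\sigma_i)$ is strictly convex with minimum value $0$ at $\sigma_i$. For $\mu>0$ and $\sigma\in\mathcal X$, $\pi^{\mu,\sigma}$ is a profile with $\pi_i^{\mu,\sigma}\in\arg\max_{\pi_i}\{v_i(\pi_i,\pi^{\mu,\sigma}_{-i})-\mu G(\pi_i,\sigma_i)\}$ for all $i$. Assumption A: for all $\sigma_i,\pi_i,\pi_i'\in\mathcal X_i$, $$\gamma D_\psi(\pi_i',\pi_i)\le G(\pi_i',\sigma_i)-G(\pi_i,\sigma_i)-\langle\nabla_{\pi_i}G(\pi_i,\sigma_i),\pi_i'-\pi_i\rangle\le\beta D_\psi(\pi_i',\pi_i).$$ MD-SP with noisy feedback: $$\pi_i^{t+1}=\arg\max_{x\in\mathcal X_i}\{\eta_t\langle\nabla_{\pi_i}v_i(\pi^t)+\xi_i^t-\mu\nabla_{\pi_i}G(\pi_i^t,\sigma_i),x\rangle-D_\psi(x,\pi_i^t)\}.$$ $\mathcal F_t$ is the sigma-algebra generated by the feedback $(\nabla_{\pi_i}v_i(\pi^s)+\xi_i^s)_{i}$ for $s<t$. Assumption B: $\mathbb E[\xi_i^t\mid\mathcal F_t]=0$ and $\mathbb E[\|\xi_i^t\|^2\mid\mathcal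 F_t]\le C^2$ for all $i,t$. *)

theory Defs
  imports "HOL-Analysis.Analysis" "HOL-Probability.Probability"
begin

definition strict_convex_on' :: "'a::real_vector set \<Rightarrow> ('a \<Rightarrow> real) \<Rightarrow> bool" where
  "strict_convex_on' S f \<longleftrightarrow> convex S \<and>
     (\<forall>x\<in>S. \<forall>y\<in>S. \<forall>t::real. x \<noteq> y \<and> 0 < t \<and> t < 1 \<longrightarrow>
        f ((1 - t) *\<^sub>R x + t *\<^sub>R y) < (1 - t) * f x + t * f y)"

definition strongly_convex_on :: "'a::real_normed_vector set \<Rightarrow> real \<Rightarrow> ('a \<Rightarrow> real) \<Rightarrow> bool" where
  "strongly_convex_on S \<rho> f \<longleftrightarrow> convex S \<and>
     (\<forall>x\<in>S. \<forall>y\<in>S. \<forall>t::real. 0 \<le> t \<and> t \<le> 1 \<longrightarrow>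
        f ((1 - t) *\<^sub>R x + t *\<^sub>R y)
          \<le> (1 - t) * f x + t * f y - \<rho> / 2 * t * (1 - t) * (norm (x - y))\<^sup>2)"

definition bregman :: "('a::real_inner \<Rightarrow> real) \<Rightarrow> ('a \<Rightarrow> 'a) \<Rightarrow> 'a \<Rightarrow> 'a \<Rightarrow> real" where
  "bregman psi dpsi x y = psi x - psi y - inner (dpsi y) (x - y)"

definition bregman_prof :: "('a::real_inner \<Rightarrow> real) \<Rightarrow> ('a \<Rightarrow> 'a) \<Rightarrow> 'a^'n::finite \<Rightarrow> 'a^'n \<Rightarrow> real" where
  "bregman_prof psi dpsi p q = (\<Sum>i\<in>UNIV. bregman psi dpsi (p $ i) (q $ i))"

definition upd :: "'a^'n::finite \<Rightarrow> 'n \<Rightarrow> 'a \<Rightarrow> 'a^'n" where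
  "upd p i x = (\<chi> j. if j = i then x else p $ j)"

definition profiles :: "('n::finite \<Rightarrow> 'a set) \<Rightarrow> ('a^'n) set" where
  "profiles X = {p. \<forall>i. p $ i \<in> X i}"

definition feedback_filtration ::
  "'b measure \<Rightarrow> ('n \<Rightarrow> nat \<Rightarrow> 'b \<Rightarrow> 'a::euclidean_space) \<Rightarrow> nat \<Rightarrow> 'b measure" where
  "feedback_filtration M fb t =
     sigma (space M) {fb i s -` A \<inter> space M | i s A. s < t \<and> A \<in> sets borel}"

end

theory Submission
  imports Defs
begin

lemma dir_quot_tendsto:
  fixes f :: "'a::real_normed_vector \<Rightarrow> real"
  assumes df: "(f has_derivative f') (at a within S)" and cS: "convex S" and aS: "a \<in> S" and xS: "x \<in> S"
  shows "((\<lambda>t. (f (a + t *\<^sub>R (x - a)) - f a) / t) \<longlongrightarrow> f' (x - a)) (at_right 0)"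
proof -
  have pS: "(\<lambda>t. a + t *\<^sub>R (x - a)) ` {0..1} \<subseteq> S"
  proof
    fix z assume "z \<in> (\<lambda>t. a + t *\<^sub>R (x - a)) ` {0..1}"
    then obtain t where t: "t \<in> {0..1}" "z = a + t *\<^sub>R (x - a)" by auto
    have "z = (1 - t) *\<^sub>R a + t *\<^sub>R x" using t by (simp add: algebra_simps)
    thus "z \<in> S" using cS aS xS t convexD_alt by auto
  qed
  have dp: "((\<lambda>t. a + t *\<^sub>R (x - a)) has_derivative (\<lambda>t. t *\<^sub>R (x - a))) (at 0 within {0..1})"
    by (auto intro!: derivative_eq_intros)
  have df2: "(f has_derivative f') (at ((\<lambda>t. a + t *\<^sub>R (x - a)) 0) within (\<lambda>t. a + t *\<^sub>R (x - a)) ` {0..1})"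
    using has_derivative_subset[OF df pS] by simp
  have "((\<lambda>t. f (a + t *\<^sub>R (x - a))) has_derivative (\<lambda>t. f' (t *\<^sub>R (x - a)))) (at 0 within {0..1})"
    using has_derivative_in_compose[OF dp df2] by (simp add: o_def)
  moreover have lin: "linear f'" using df has_derivative_linear by blast
  ultimately have "((\<lambda>t. f (a + t *\<^sub>R (x - a))) has_derivative (\<lambda>t. t * f' (x - a))) (at 0 within {0..1})"
    by (simp add: linear_scale)
  hence "((\<lambda>t. f (a + t *\<^sub>R (x - a))) has_real_derivative f' (x - a)) (at 0 within {0..1})"
    by (simp add: has_field_derivative_def mult.commute[of _ "f' (x - a)"])
  hence "((\<lambda>y. (f (a + y *\<^sub>R (x - a)) - f (a + 0 *\<^sub>R (x - a))) / (y - 0)) \<longlongrightarrow> f' (x - a)) (at 0 within {0..1})"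
    by (rule has_field_derivative_iff[THEN iffD1])
  thus ?thesis by (simp add: at_within_Icc_at_right)
qed

lemma dir_max:
  fixes f :: "'a::real_normed_vector \<Rightarrow> real"
  assumes df: "(f has_derivative f') (at a within S)" and cS: "convex S" and aS: "a \<in> S" and xS: "x \<in> S"
    and mx: "\<And>z. z \<in> S \<Longrightarrow> f z \<le> f a"
  shows "f' (x - a) \<le> 0"
proof (rule tendsto_upperbound[OF dir_quot_tendsto[OF df cS aS xS]])
  have "\<And>t. 0 < t \<Longrightarrow> t < 1 \<Longrightarrow> (f (a + t *\<^sub>R (x - a)) - f a) / t \<le> 0"
  proof -
    fix t :: real assume t: "0 < t" "t < 1"
    have "a + t *\<^sub>R (x - a) = (1 - t) *\<^sub>R a + t *\<^sub>R x" by (simp add: algebra_simps)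
    hence "a + t *\<^sub>R (x - a) \<in> S" using convexD_alt[OF cS aS xS, of t] t by auto
    hence "f (a + t *\<^sub>R (x - a)) - f a \<le> 0" using mx by auto
    thus "(f (a + t *\<^sub>R (x - a)) - f a) / t \<le> 0" using t by (simp add: divide_nonpos_pos)
  qed
  thus "\<forall>\<^sub>F t in at_right 0. (f (a + t *\<^sub>R (x - a)) - f a) / t \<le> 0"
    unfolding eventually_at_right_field by (intro exI[of _ 1]) auto
qed (rule trivial_limit_at_right_real)
lemma sc_grad:
  fixes psi :: "'a::real_normed_vector \<Rightarrow> real"
  assumes sc: "strongly_convex_on S \<rho> psi" and df: "(psi has_derivative f') (at y within S)"
    and xS: "x \<in> S" and yS: "y \<in> S"
  shows "f' (x - y) \<le> psi x - psi y - \<rho> / 2 * (norm (x - y))\<^sup>2"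
proof -
  have cS: "convex S" using sc unfolding strongly_convex_on_def by simp
  let ?g = "\<lambda>t::real. psi x - psi y - \<rho> / 2 * (1 - t) * (norm (x - y))\<^sup>2"
  have lim: "(?g \<longlongrightarrow> ?g 0) (at_right 0)"
    by (intro tendsto_intros)
  have ev: "\<And>t. 0 < t \<Longrightarrow> t < 1 \<Longrightarrow> (psi (y + t *\<^sub>R (x - y)) - psi y) / t \<le> ?g t"
  proof -
    fix t :: real assume t: "0 < t" "t < 1"
    have e: "y + t *\<^sub>R (x - y) = (1 - t) *\<^sub>R y + t *\<^sub>R x" by (simp add: algebra_simps)
    have "psi ((1 - t) *\<^sub>R y + t *\<^sub>R x) \<le> (1 - t) * psi y + t * psi x - \<rho> / 2 * t * (1 - t) * (norm (y - x))\<^sup>2"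
      using sc xS yS t unfolding strongly_convex_on_def by auto
    hence "psi (y + t *\<^sub>R (x - y)) - psi y \<le> t * ?g t"
      unfolding e by (simp add: norm_minus_commute algebra_simps)
    thus "(psi (y + t *\<^sub>R (x - y)) - psi y) / t \<le> ?g t" using t by (simp add: divide_le_eq mult.commute)
  qed
  have "f' (x - y) \<le> ?g 0"
  proof (rule tendsto_le[OF trivial_limit_at_right_real lim dir_quot_tendsto[OF df cS yS xS]])
    show "\<forall>\<^sub>F t in at_right 0. (psi (y + t *\<^sub>R (x - y)) - psi y) / t \<le> ?g t"
      unfolding eventually_at_right_field using ev by (intro exI[of _ 1]) auto
  qed
  thus ?thesis by simp
qed



lemma young_inner:
  fixes a b :: "'a::real_inner"
  assumes c: "c > 0"
  shows "inner a b \<le> (norm a)\<^sup>2 / (4 * c) + c * (norm b)\<^sup>2"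
proof -
  have "inner a b \<le> norm a * norm b" by (rule norm_cauchy_schwarz)
  moreover have "norm a * norm b \<le> (norm a)\<^sup>2 / (4 * c) + c * (norm b)\<^sup>2"
  proof -
    have "0 \<le> (norm a - 2 * c * norm b)\<^sup>2" by simp
    hence "4 * c * (norm a * norm b) \<le> (norm a)\<^sup>2 + 4 * c\<^sup>2 * (norm b)\<^sup>2"
      by (simp add: power2_eq_square algebra_simps)
    hence "4 * c * (norm a * norm b) \<le> 4 * c * ((norm a)\<^sup>2 / (4 * c) + c * (norm b)\<^sup>2)"
      using c by (simp add: algebra_simps power2_eq_square)
    thus ?thesis using c by (simp add: mult_le_cancel_left_pos)
  qed
  ultimately show ?thesis by linarith
qed

lemma norm_vec_sq: "(norm (z :: 'a::real_normed_vector ^'n::finite))\<^sup>2 = (\<Sum>i\<in>UNIV. (norm (z $ i))\<^sup>2)"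
  unfolding norm_vec_def L2_set_def by (simp add: sum_nonneg)

lemma three_point:
  "inner (dpsi y - dpsi x) (p - x) = bregman psi dpsi p x + bregman psi dpsi x y - bregman psi dpsi p y"
  unfolding bregman_def by (simp add: inner_diff_left inner_diff_right algebra_simps)

lemma gen_eq: "(-(a::real)) * q + (a * (r/2)) * n = -(a * q) + a * (r/2 * n)" by (simp add: algebra_simps)

lemma det_step:
  fixes X :: "'n::finite \<Rightarrow> 'a::euclidean_space set"
    and dv :: "'n \<Rightarrow> 'a^'n \<Rightarrow> 'a" and psi :: "'a \<Rightarrow> real" and dpsi :: "'a \<Rightarrow> 'a"
    and G :: "'a \<Rightarrow> 'a \<Rightarrow> real" and dG :: "'a \<Rightarrow> 'a \<Rightarrow> 'a"
    and \<sigma> p y x :: "'a^'n" and e :: "'n \<Rightarrow> 'a"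
  assumes yin: "y \<in> profiles X" and xin: "x \<in> profiles X" and pin: "p \<in> profiles X" and sin: "\<sigma> \<in> profiles X"
    and D_lb: "\<And>i a b. a \<in> X i \<Longrightarrow> b \<in> X i \<Longrightarrow> \<rho> / 2 * (norm (a - b))\<^sup>2 \<le> bregman psi dpsi a b"
    and opt_x: "\<And>i z. z \<in> X i \<Longrightarrow>
        inner (\<eta> *\<^sub>R (dv i y + e i - \<mu> *\<^sub>R dG (y $ i) (\<sigma> $ i)) - dpsi (x $ i) + dpsi (y $ i)) (z - x $ i) \<le> 0"
    and opt_p: "\<And>i z. z \<in> X i \<Longrightarrow> inner (dv i p - \<mu> *\<^sub>R dG (p $ i) (\<sigma> $ i)) (z - p $ i) \<le> 0"
    and mono: "(\<Sum>i\<in>UNIV. inner (dv i y - dv i p) (y $ i - p $ i)) \<le> 0"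
    and smooth: "(\<Sum>i\<in>UNIV. (norm (dv i y - dv i p))\<^sup>2) \<le> L\<^sup>2 * (norm (y - p))\<^sup>2"
    and assmA: "\<And>i s a b. s \<in> X i \<Longrightarrow> a \<in> X i \<Longrightarrow> b \<in> X i \<Longrightarrow>
        \<gamma> * bregman psi dpsi b a \<le> G b s - G a s - inner (dG a s) (b - a)
        \<and> G b s - G a s - inner (dG a s) (b - a) \<le> \<beta> * bregman psi dpsi b a"
    and eta_pos: "\<eta> > 0" and rho_pos: "\<rho> > 0" and mu_pos: "\<mu> > 0" and beta_pos: "\<beta> > 0" and gamma_pos: "\<gamma> > 0"
    and eta_le: "\<eta> * (\<mu> * (\<gamma> + 2 * \<beta>) + 8 * L\<^sup>2 / (\<mu> * \<gamma> * \<rho>\<^sup>2)) \<le> 1"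
  shows "bregman_prof psi dpsi p x \<le> (1 - \<eta> * (\<mu> * \<gamma> / 2)) * bregman_prof psi dpsi p y
     + \<eta> * (\<Sum>i\<in>UNIV. inner (e i) (y $ i - p $ i)) + \<eta>\<^sup>2 / \<rho> * (\<Sum>i\<in>UNIV. (norm (e i))\<^sup>2)"
proof -
  define D where "D = bregman psi dpsi"
  define c1 where "c1 = \<rho> / (4 * \<eta>) - \<mu> * \<beta> * \<rho> / 2"
  have Xy: "\<And>i. y $ i \<in> X i" and Xx: "\<And>i. x $ i \<in> X i" and Xp: "\<And>i. p $ i \<in> X i" and Xs: "\<And>i. \<sigma> $ i \<in> X i"
    using yin xin pin sin unfolding profiles_def by auto
  have q0: "\<eta> * (\<mu> * (\<gamma> + 2 * \<beta>)) + \<eta> * (8 * L\<^sup>2 / (\<mu> * \<gamma> * \<rho>\<^sup>2)) \<le> 1"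
    using eta_le by (simp add: algebra_simps)
  have q1: "0 \<le> \<eta> * (8 * L\<^sup>2 / (\<mu> * \<gamma> * \<rho>\<^sup>2))" using eta_pos mu_pos gamma_pos rho_pos by simp
  have q2: "\<eta> * (\<mu> * \<gamma>) > 0" using eta_pos mu_pos gamma_pos by simp
  have etamb: "\<eta> * \<mu> * \<beta> \<le> 1 / 2" using q0 q1 q2 by (simp add: algebra_simps)
  have c1_pos: "c1 > 0"
  proof -
    have "2 * (\<eta> * \<mu> * \<beta>) < 1" using q0 q1 q2 by (simp add: algebra_simps)
    hence "\<rho> * (2 * (\<eta> * \<mu> * \<beta>)) < \<rho>" using rho_pos by simp
    thus ?thesis unfolding c1_def using eta_pos rho_pos by (simp add: field_simps)
  qed
  have c1_L: "L\<^sup>2 / (4 * c1) \<le> \<mu> * \<gamma> * \<rho> / 4"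
  proof -
    have "\<eta> * (8 * L\<^sup>2 / (\<mu> * \<gamma> * \<rho>\<^sup>2)) \<le> 1 - 2 * (\<eta> * \<mu> * \<beta>)"
      using q0 q2 by (simp add: algebra_simps)
    hence "\<eta> * (8 * L\<^sup>2) \<le> (1 - 2 * (\<eta> * \<mu> * \<beta>)) * (\<mu> * \<gamma> * \<rho>\<^sup>2)"
      using mu_pos gamma_pos rho_pos by (simp add: field_simps)
    moreover have "4 * c1 * \<eta> = \<rho> * (1 - 2 * (\<eta> * \<mu> * \<beta>))"
      unfolding c1_def using eta_pos by (simp add: field_simps)
    ultimately have "\<eta> * (8 * L\<^sup>2) \<le> 4 * c1 * \<eta> * (\<mu> * \<gamma> * \<rho>)"
    proof -
      assume h1: "\<eta> * (8 * L\<^sup>2) \<le> (1 - 2 * (\<eta> * \<mu> * \<beta>)) * (\<mu> * \<gamma> * \<rho>\<^sup>2)"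
        and h2: "4 * c1 * \<eta> = \<rho> * (1 - 2 * (\<eta> * \<mu> * \<beta>))"
      have "4 * c1 * \<eta> * (\<mu> * \<gamma> * \<rho>) = (1 - 2 * (\<eta> * \<mu> * \<beta>)) * (\<mu> * \<gamma> * \<rho>\<^sup>2)"
        unfolding h2 by (simp add: power2_eq_square algebra_simps)
      thus ?thesis using h1 by linarith
    qed
    hence "2 * L\<^sup>2 \<le> c1 * (\<mu> * \<gamma> * \<rho>)" using eta_pos by (simp add: algebra_simps)
    hence "L\<^sup>2 \<le> c1 * (\<mu> * \<gamma> * \<rho>)" using zero_le_power2[of L] by linarith
    thus ?thesis using c1_pos by (simp add: field_simps)
  qed
  have player: "D (p $ i) (x $ i) \<le> D (p $ i) (y $ i) - (1 - \<eta> * \<mu> * \<beta>) * D (x $ i) (y $ i)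
      - \<eta> * \<mu> * \<gamma> * D (p $ i) (y $ i)
      + \<eta> * inner (dv i y - dv i p) (y $ i - p $ i)
      + \<eta> * ((norm (dv i y - dv i p))\<^sup>2 / (4 * c1) + c1 * (norm (x $ i - y $ i))\<^sup>2)
      + \<eta> * inner (e i) (y $ i - p $ i) + \<eta>\<^sup>2 / \<rho> * (norm (e i))\<^sup>2
      + \<rho> / 4 * (norm (x $ i - y $ i))\<^sup>2" for i
  proof -
    let ?g = "dv i y + e i - \<mu> *\<^sub>R dG (y $ i) (\<sigma> $ i)"
    have o1: "inner (\<eta> *\<^sub>R ?g - dpsi (x $ i) + dpsi (y $ i)) (p $ i - x $ i) \<le> 0" using opt_x Xp by blast
    have tp: "inner (dpsi (y $ i) - dpsi (x $ i)) (p $ i - x $ i) = D (p $ i) (x $ i) + D (x $ i) (y $ i) - D (p $ i) (y $ i)"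
      unfolding D_def by (rule three_point)
    have s1: "D (p $ i) (x $ i) \<le> D (p $ i) (y $ i) - D (x $ i) (y $ i) + \<eta> * inner ?g (x $ i - p $ i)"
    proof -
      have "inner (\<eta> *\<^sub>R ?g - dpsi (x $ i) + dpsi (y $ i)) (p $ i - x $ i)
          = \<eta> * inner ?g (p $ i - x $ i) + inner (dpsi (y $ i) - dpsi (x $ i)) (p $ i - x $ i)"
        by (simp add: inner_diff_left inner_add_left)
      moreover have "inner ?g (p $ i - x $ i) = - inner ?g (x $ i - p $ i)"
        by (metis inner_minus_right minus_diff_eq)
      ultimately show ?thesis using o1 tp by simp
    qed
    have o2: "inner (dv i p - \<mu> *\<^sub>R dG (p $ i) (\<sigma> $ i)) (x $ i - p $ i) \<le> 0" using opt_p Xx by blast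
    note A1 = assmA[OF Xs Xy Xx] and A2 = assmA[OF Xs Xp Xx] and A3 = assmA[OF Xs Xy Xp]
    have Dxp: "0 \<le> D (x $ i) (p $ i)"
    proof -
      have "0 \<le> \<rho> / 2 * (norm (x $ i - p $ i))\<^sup>2" using rho_pos by simp
      thus ?thesis using D_lb[OF Xx Xp, of i] unfolding D_def by linarith
    qed
    have Gid: "- \<mu> * inner (dG (y $ i) (\<sigma> $ i) - dG (p $ i) (\<sigma> $ i)) (x $ i - p $ i)
       = \<mu> * ((G (x $ i) (\<sigma> $ i) - G (y $ i) (\<sigma> $ i) - inner (dG (y $ i) (\<sigma> $ i)) (x $ i - y $ i))
            - (G (x $ i) (\<sigma> $ i) - G (p $ i) (\<sigma> $ i) - inner (dG (p $ i) (\<sigma> $ i)) (x $ i - p $ i))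
            - (G (p $ i) (\<sigma> $ i) - G (y $ i) (\<sigma> $ i) - inner (dG (y $ i) (\<sigma> $ i)) (p $ i - y $ i)))"
      by (simp add: inner_diff_left inner_diff_right algebra_simps)
    have Gb: "- \<mu> * inner (dG (y $ i) (\<sigma> $ i) - dG (p $ i) (\<sigma> $ i)) (x $ i - p $ i)
       \<le> \<mu> * \<beta> * D (x $ i) (y $ i) - \<mu> * \<gamma> * D (p $ i) (y $ i)"
    proof -
      have "- \<mu> * inner (dG (y $ i) (\<sigma> $ i) - dG (p $ i) (\<sigma> $ i)) (x $ i - p $ i)
         \<le> \<mu> * (\<beta> * D (x $ i) (y $ i) - \<gamma> * D (x $ i) (p $ i) - \<gamma> * D (p $ i) (y $ i))"
        unfolding Gid D_def
      proof (rule mult_left_mono)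
        show "0 \<le> \<mu>" using mu_pos by simp
      qed (use A1[of i] A2[of i] A3[of i] in linarith)
      moreover have "0 \<le> \<mu> * \<gamma> * D (x $ i) (p $ i)" using Dxp mu_pos gamma_pos by simp
      ultimately show ?thesis by (simp add: algebra_simps)
    qed
    have dec: "inner ?g (x $ i - p $ i) = inner (dv i y - dv i p) (y $ i - p $ i) + inner (dv i y - dv i p) (x $ i - y $ i)
        + inner (dv i p - \<mu> *\<^sub>R dG (p $ i) (\<sigma> $ i)) (x $ i - p $ i)
        - \<mu> * inner (dG (y $ i) (\<sigma> $ i) - dG (p $ i) (\<sigma> $ i)) (x $ i - p $ i)
        + inner (e i) (y $ i - p $ i) + inner (e i) (x $ i - y $ i)"
      by (simp add: inner_diff_left inner_diff_right inner_add_left inner_add_right algebra_simps)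
    have Y1: "inner (dv i y - dv i p) (x $ i - y $ i) \<le> (norm (dv i y - dv i p))\<^sup>2 / (4 * c1) + c1 * (norm (x $ i - y $ i))\<^sup>2"
      by (rule young_inner[OF c1_pos])
    have Y2: "inner (e i) (x $ i - y $ i) \<le> (norm (e i))\<^sup>2 / (4 * (\<rho> / (4 * \<eta>))) + (\<rho> / (4 * \<eta>)) * (norm (x $ i - y $ i))\<^sup>2"
      by (rule young_inner) (use rho_pos eta_pos in simp)
    have Y2': "\<eta> * ((norm (e i))\<^sup>2 / (4 * (\<rho> / (4 * \<eta>))) + (\<rho> / (4 * \<eta>)) * (norm (x $ i - y $ i))\<^sup>2)
        = \<eta>\<^sup>2 / \<rho> * (norm (e i))\<^sup>2 + \<rho> / 4 * (norm (x $ i - y $ i))\<^sup>2"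
      using eta_pos rho_pos by (simp add: field_simps power2_eq_square)
    have "\<eta> * inner ?g (x $ i - p $ i) \<le> \<eta> * (inner (dv i y - dv i p) (y $ i - p $ i)
        + ((norm (dv i y - dv i p))\<^sup>2 / (4 * c1) + c1 * (norm (x $ i - y $ i))\<^sup>2)
        + (\<mu> * \<beta> * D (x $ i) (y $ i) - \<mu> * \<gamma> * D (p $ i) (y $ i))
        + inner (e i) (y $ i - p $ i)
        + ((norm (e i))\<^sup>2 / (4 * (\<rho> / (4 * \<eta>))) + (\<rho> / (4 * \<eta>)) * (norm (x $ i - y $ i))\<^sup>2))"
      unfolding dec using o2 Gb Y1 Y2 eta_pos by (intro mult_left_mono) auto
    also have "\<dots> = \<eta> * inner (dv i y - dv i p) (y $ i - p $ i)
        + \<eta> * ((norm (dv i y - dv i p))\<^sup>2 / (4 * c1) + c1 * (norm (x $ i - y $ i))\<^sup>2)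
        + \<eta> * \<mu> * \<beta> * D (x $ i) (y $ i) - \<eta> * \<mu> * \<gamma> * D (p $ i) (y $ i)
        + \<eta> * inner (e i) (y $ i - p $ i)
        + (\<eta>\<^sup>2 / \<rho> * (norm (e i))\<^sup>2 + \<rho> / 4 * (norm (x $ i - y $ i))\<^sup>2)"
      unfolding Y2'[symmetric] by (simp add: algebra_simps)
    finally show ?thesis using s1 by (simp add: algebra_simps)
  qed
  define a4 where "a4 = \<eta> * c1 + \<rho> / 4"
  have a4_eq: "a4 = (1 - \<eta> * \<mu> * \<beta>) * (\<rho> / 2)"
    unfolding a4_def c1_def using eta_pos by (simp add: field_simps)
  have player': "D (p $ i) (x $ i) \<le> (1 - \<eta> * \<mu> * \<gamma>) * D (p $ i) (y $ i) + (- (1 - \<eta> * \<mu> * \<beta>)) * D (x $ i) (y $ i)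
      + \<eta> * inner (dv i y - dv i p) (y $ i - p $ i) + (\<eta> / (4 * c1)) * (norm (dv i y - dv i p))\<^sup>2
      + a4 * (norm (x $ i - y $ i))\<^sup>2 + \<eta> * inner (e i) (y $ i - p $ i) + \<eta>\<^sup>2 / \<rho> * (norm (e i))\<^sup>2" for i
    using player[of i] unfolding a4_def by (simp add: algebra_simps)
  have S: "(\<Sum>i\<in>UNIV. D (p $ i) (x $ i)) \<le> (\<Sum>i\<in>UNIV. (1 - \<eta> * \<mu> * \<gamma>) * D (p $ i) (y $ i) + (- (1 - \<eta> * \<mu> * \<beta>)) * D (x $ i) (y $ i)
      + \<eta> * inner (dv i y - dv i p) (y $ i - p $ i) + (\<eta> / (4 * c1)) * (norm (dv i y - dv i p))\<^sup>2
      + a4 * (norm (x $ i - y $ i))\<^sup>2 + \<eta> * inner (e i) (y $ i - p $ i) + \<eta>\<^sup>2 / \<rho> * (norm (e i))\<^sup>2)"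
    by (rule sum_mono) (rule player')
  also have "\<dots> = (1 - \<eta> * \<mu> * \<gamma>) * (\<Sum>i\<in>UNIV. D (p $ i) (y $ i)) + (- (1 - \<eta> * \<mu> * \<beta>)) * (\<Sum>i\<in>UNIV. D (x $ i) (y $ i))
      + \<eta> * (\<Sum>i\<in>UNIV. inner (dv i y - dv i p) (y $ i - p $ i)) + (\<eta> / (4 * c1)) * (\<Sum>i\<in>UNIV. (norm (dv i y - dv i p))\<^sup>2)
      + a4 * (\<Sum>i\<in>UNIV. (norm (x $ i - y $ i))\<^sup>2) + \<eta> * (\<Sum>i\<in>UNIV. inner (e i) (y $ i - p $ i)) + \<eta>\<^sup>2 / \<rho> * (\<Sum>i\<in>UNIV. (norm (e i))\<^sup>2)"
    by (simp add: sum.distrib sum_distrib_left)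
  finally have S1: "(\<Sum>i\<in>UNIV. D (p $ i) (x $ i)) \<le> \<dots>" .
  have nyp: "(norm (y - p))\<^sup>2 = (\<Sum>i\<in>UNIV. (norm (y $ i - p $ i))\<^sup>2)" by (simp add: norm_vec_sq)
  have Dxy: "\<rho> / 2 * (\<Sum>i\<in>UNIV. (norm (x $ i - y $ i))\<^sup>2) \<le> (\<Sum>i\<in>UNIV. D (x $ i) (y $ i))"
    unfolding sum_distrib_left D_def by (rule sum_mono) (rule D_lb[OF Xx Xy])
  have Dpy: "\<rho> / 2 * (\<Sum>i\<in>UNIV. (norm (y $ i - p $ i))\<^sup>2) \<le> (\<Sum>i\<in>UNIV. D (p $ i) (y $ i))"
    unfolding sum_distrib_left D_def
  proof (rule sum_mono)
    fix i show "\<rho> / 2 * (norm (y $ i - p $ i))\<^sup>2 \<le> bregman psi dpsi (p $ i) (y $ i)"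
      using D_lb[OF Xp Xy, of i] by (simp add: norm_minus_commute)
  qed
  have T1: "(- (1 - \<eta> * \<mu> * \<beta>)) * (\<Sum>i\<in>UNIV. D (x $ i) (y $ i)) + a4 * (\<Sum>i\<in>UNIV. (norm (x $ i - y $ i))\<^sup>2) \<le> 0"
  proof -
    have h: "(1 - \<eta> * \<mu> * \<beta>) * (\<rho> / 2 * (\<Sum>i\<in>UNIV. (norm (x $ i - y $ i))\<^sup>2)) \<le> (1 - \<eta> * \<mu> * \<beta>) * (\<Sum>i\<in>UNIV. D (x $ i) (y $ i))"
      using Dxy etamb by (intro mult_left_mono) auto
    have "(- (1 - \<eta> * \<mu> * \<beta>)) * (\<Sum>i\<in>UNIV. D (x $ i) (y $ i)) + a4 * (\<Sum>i\<in>UNIV. (norm (x $ i - y $ i))\<^sup>2)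
      = - ((1 - \<eta> * \<mu> * \<beta>) * (\<Sum>i\<in>UNIV. D (x $ i) (y $ i))) + (1 - \<eta> * \<mu> * \<beta>) * (\<rho> / 2 * (\<Sum>i\<in>UNIV. (norm (x $ i - y $ i))\<^sup>2))"
      unfolding a4_eq by (rule gen_eq)
    thus ?thesis using h by linarith
  qed
  have T2: "(\<eta> / (4 * c1)) * (\<Sum>i\<in>UNIV. (norm (dv i y - dv i p))\<^sup>2) \<le> \<eta> * (\<mu> * \<gamma> / 2) * (\<Sum>i\<in>UNIV. D (p $ i) (y $ i))"
  proof -
    have "(\<eta> / (4 * c1)) * (\<Sum>i\<in>UNIV. (norm (dv i y - dv i p))\<^sup>2) \<le> (\<eta> / (4 * c1)) * (L\<^sup>2 * (\<Sum>i\<in>UNIV. (norm (y $ i - p $ i))\<^sup>2))"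
      using smooth nyp eta_pos c1_pos by (intro mult_left_mono) auto
    also have "\<dots> = \<eta> * (L\<^sup>2 / (4 * c1)) * (\<Sum>i\<in>UNIV. (norm (y $ i - p $ i))\<^sup>2)" by simp
    also have "\<dots> \<le> \<eta> * (\<mu> * \<gamma> * \<rho> / 4) * (\<Sum>i\<in>UNIV. (norm (y $ i - p $ i))\<^sup>2)"
      using c1_L eta_pos by (intro mult_right_mono mult_left_mono) (auto intro: sum_nonneg)
    also have "\<dots> = \<eta> * (\<mu> * \<gamma> / 2) * (\<rho> / 2 * (\<Sum>i\<in>UNIV. (norm (y $ i - p $ i))\<^sup>2))" by simp
    also have "\<dots> \<le> \<eta> * (\<mu> * \<gamma> / 2) * (\<Sum>i\<in>UNIV. D (p $ i) (y $ i))"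
      using Dpy eta_pos mu_pos gamma_pos by (intro mult_left_mono) auto
    finally show ?thesis .
  qed
  have T3: "\<eta> * (\<Sum>i\<in>UNIV. inner (dv i y - dv i p) (y $ i - p $ i)) \<le> 0"
    using mono eta_pos by (simp add: mult_nonpos_nonneg mult_le_0_iff)
  have "(\<Sum>i\<in>UNIV. D (p $ i) (x $ i)) \<le> (1 - \<eta> * (\<mu> * \<gamma> / 2)) * (\<Sum>i\<in>UNIV. D (p $ i) (y $ i))
     + \<eta> * (\<Sum>i\<in>UNIV. inner (e i) (y $ i - p $ i)) + \<eta>\<^sup>2 / \<rho> * (\<Sum>i\<in>UNIV. (norm (e i))\<^sup>2)"
  proof -
    have e: "(1 - \<eta> * (\<mu> * \<gamma> / 2)) * (\<Sum>i\<in>UNIV. D (p $ i) (y $ i)) = (1 - \<eta> * \<mu> * \<gamma>) * (\<Sum>i\<in>UNIV. D (p $ i) (y $ i))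
       + \<eta> * (\<mu> * \<gamma> / 2) * (\<Sum>i\<in>UNIV. D (p $ i) (y $ i))" by (simp add: algebra_simps)
    show ?thesis unfolding e using S1 T1 T2 T3 by linarith
  qed
  thus ?thesis unfolding bregman_prof_def D_def .
qed



lemma dense_subset:
  fixes S :: "'a::euclidean_space set"
  obtains Q where "countable Q" "Q \<subseteq> S" "\<And>w d. w \<in> S \<Longrightarrow> d > 0 \<Longrightarrow> \<exists>q\<in>Q. dist q w < d"
proof -
  obtain \<B> :: "'a set set" where cB: "countable \<B>" and oB: "\<And>C. C \<in> \<B> \<Longrightarrow> open C"
    and bB: "\<And>T. open T \<Longrightarrow> \<exists>U. U \<subseteq> \<B> \<and> T = \<Union>U"
    by (rule univ_second_countable) blast
  define Q where "Q = (\<lambda>B. SOME x. x \<in> B \<inter> S) ` {B\<in>\<B>. B \<inter> S \<noteq> {}}"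
  have someP: "\<And>B. B \<inter> S \<noteq> {} \<Longrightarrow> (SOME x. x \<in> B \<inter> S) \<in> B \<inter> S" by (metis ex_in_conv someI_ex)
  have "countable Q" unfolding Q_def using cB by auto
  moreover have "Q \<subseteq> S" unfolding Q_def using someP by blast
  moreover have "\<exists>q\<in>Q. dist q w < d" if w: "w \<in> S" and d: "d > 0" for w d
  proof -
    obtain U where U: "U \<subseteq> \<B>" "ball w d = \<Union>U" using bB[of "ball w d"] by auto
    have "w \<in> ball w d" using d by simp
    then obtain B where B: "B \<in> U" "w \<in> B" using U by auto
    have BS: "B \<inter> S \<noteq> {}" using B w by auto
    let ?q = "SOME x. x \<in> B \<inter> S"
    have q: "?q \<in> B \<inter> S" using someP[OF BS] .
    have "?q \<in> Q" unfolding Q_def using BS B U by auto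
    moreover have "?q \<in> ball w d" using q B U by auto
    ultimately show ?thesis by (auto simp: dist_commute)
  qed
  ultimately show ?thesis using that by blast
qed

lemma approx_val:
  fixes f :: "'a::metric_space \<Rightarrow> real"
  assumes cont: "continuous_on S f" and w: "w \<in> S" and QS: "Q \<subseteq> S"
    and dense: "\<And>d. d > 0 \<Longrightarrow> \<exists>q\<in>Q. dist q w < d" and e: "e > 0"
  shows "\<exists>q\<in>Q. f w - e < f q"
proof -
  obtain d where d: "d > 0" "\<And>x'. x' \<in> S \<Longrightarrow> dist x' w < d \<Longrightarrow> dist (f x') (f w) < e"
    using cont w e unfolding continuous_on_iff by blast
  obtain q where q: "q \<in> Q" "dist q w < d" using dense d by blast
  have "dist (f q) (f w) < e" using d q QS by auto
  hence "f w - e < f q" by (simp add: dist_real_def abs_less_iff)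
  thus ?thesis using q by blast
qed

lemma argmax_meas:
  fixes \<Phi> :: "'b \<Rightarrow> 'a::euclidean_space \<Rightarrow> real" and x :: "'b \<Rightarrow> 'a"
  assumes S: "compact S"
    and cont: "\<And>\<omega>. \<omega> \<in> space N \<Longrightarrow> continuous_on S (\<Phi> \<omega>)"
    and meas: "\<And>w. w \<in> S \<Longrightarrow> (\<lambda>\<omega>. \<Phi> \<omega> w) \<in> borel_measurable N"
    and xS: "\<And>\<omega>. \<omega> \<in> space N \<Longrightarrow> x \<omega> \<in> S"
    and xmax: "\<And>\<omega> w. \<omega> \<in> space N \<Longrightarrow> w \<in> S \<Longrightarrow> \<Phi> \<omega> w \<le> \<Phi> \<omega> (x \<omega>)"
    and xuniq: "\<And>\<omega> w. \<omega> \<in> space N \<Longrightarrow> w \<in> S \<Longrightarrow> \<Phi> \<omega> w = \<Phi> \<omega> (x \<omega>) \<Longrightarrow> w = x \<omega>"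
  shows "x \<in> borel_measurable N"
  unfolding borel_measurable_iff_halfspace_le
proof (intro ballI allI)
  fix b :: 'a and c :: real assume b: "b \<in> Basis"
  define C where "C = S \<inter> {z. z \<bullet> b \<le> c}"
  have cC: "compact C" unfolding C_def using S by (intro compact_Int_closed) (auto simp: closed_halfspace_le inner_commute[of _ b])
  show "{\<omega> \<in> space N. x \<omega> \<bullet> b \<le> c} \<in> sets N"
  proof (cases "C = {}")
    case True
    hence "{\<omega> \<in> space N. x \<omega> \<bullet> b \<le> c} = {}" using xS unfolding C_def by auto
    thus ?thesis by (metis sets.empty_sets)
  next
    case False
    hence Sne: "S \<noteq> {}" unfolding C_def by auto
    obtain QC where QC: "countable QC" "QC \<subseteq> C" "\<And>w d. w \<in> C \<Longrightarrow> d > 0 \<Longrightarrow> \<exists>q\<in>QC. dist q w < d"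
      using dense_subset[of C] by blast
    obtain QS where QS: "countable QS" "QS \<subseteq> S" "\<And>w d. w \<in> S \<Longrightarrow> d > 0 \<Longrightarrow> \<exists>q\<in>QS. dist q w < d"
      using dense_subset[of S] by blast
    have QSne: "QS \<noteq> {}" using Sne QS(3)[of _ 1] by fastforce
    have CS: "C \<subseteq> S" unfolding C_def by auto
    have eq: "{\<omega> \<in> space N. x \<omega> \<bullet> b \<le> c}
      = (\<Inter>n\<in>(UNIV::nat set). \<Union>q\<in>QC. \<Inter>q'\<in>QS. {\<omega> \<in> space N. \<Phi> \<omega> q' \<le> \<Phi> \<omega> q + 1 / Suc n})"
    proof (intro set_eqI iffI)
      fix \<omega> assume "\<omega> \<in> {\<omega> \<in> space N. x \<omega> \<bullet> b \<le> c}"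
      hence \<omega>: "\<omega> \<in> space N" and xC: "x \<omega> \<in> C" using xS unfolding C_def by auto
      show "\<omega> \<in> (\<Inter>n\<in>(UNIV::nat set). \<Union>q\<in>QC. \<Inter>q'\<in>QS. {\<omega> \<in> space N. \<Phi> \<omega> q' \<le> \<Phi> \<omega> q + 1 / Suc n})"
      proof (rule INT_I)
        fix n :: nat
        have "continuous_on C (\<Phi> \<omega>)" using cont[OF \<omega>] CS continuous_on_subset by blast
        then obtain q where q: "q \<in> QC" "\<Phi> \<omega> (x \<omega>) - 1 / Suc n < \<Phi> \<omega> q"
          using approx_val[OF _ xC QC(2) QC(3)[OF xC], of "\<Phi> \<omega>" "1 / Suc n"] by auto
        show "\<omega> \<in> (\<Union>q\<in>QC. \<Inter>q'\<in>QS. {\<omega> \<in> space N. \<Phi> \<omega> q' \<le> \<Phi> \<omega> q + 1 / Suc n})"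
        proof -
          have "\<forall>q'\<in>QS. \<Phi> \<omega> q' \<le> \<Phi> \<omega> q + 1 / Suc n"
          proof
            fix q' assume "q' \<in> QS"
            hence "\<Phi> \<omega> q' \<le> \<Phi> \<omega> (x \<omega>)" using xmax[OF \<omega>] QS(2) by auto
            thus "\<Phi> \<omega> q' \<le> \<Phi> \<omega> q + 1 / Suc n" using q(2) by linarith
          qed
          thus ?thesis using q(1) \<omega> by blast
        qed
      qed
    next
      fix \<omega> assume H: "\<omega> \<in> (\<Inter>n\<in>(UNIV::nat set). \<Union>q\<in>QC. \<Inter>q'\<in>QS. {\<omega> \<in> space N. \<Phi> \<omega> q' \<le> \<Phi> \<omega> q + 1 / Suc n})"
      have Hn: "\<omega> \<in> (\<Union>q\<in>QC. \<Inter>q'\<in>QS. {\<omega> \<in> space N. \<Phi> \<omega> q' \<le> \<Phi> \<omega> q + 1 / Suc n})" for n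
        using INT_D[OF H UNIV_I] .
      obtain q0 where "q0 \<in> QC" and h0: "\<omega> \<in> (\<Inter>q'\<in>QS. {\<omega> \<in> space N. \<Phi> \<omega> q' \<le> \<Phi> \<omega> q0 + 1 / Suc 0})"
        using Hn[of 0] by (rule UN_E)
      obtain q1 where q1: "q1 \<in> QS" using QSne by (rule ex_in_conv[THEN iffD2, THEN exE])
      have \<omega>: "\<omega> \<in> space N" using INT_D[OF h0 q1] by simp
      have "x \<omega> \<in> C"
      proof (rule ccontr)
        assume nC: "x \<omega> \<notin> C"
        have "continuous_on C (\<Phi> \<omega>)" using cont[OF \<omega>] CS continuous_on_subset by blast
        then obtain qs where qs: "qs \<in> C" "\<And>z. z \<in> C \<Longrightarrow> \<Phi> \<omega> z \<le> \<Phi> \<omega> qs"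
          using continuous_attains_sup[OF cC False] by blast
        have "\<Phi> \<omega> qs \<le> \<Phi> \<omega> (x \<omega>)" using xmax[OF \<omega>] qs CS by auto
        moreover have "\<Phi> \<omega> qs \<noteq> \<Phi> \<omega> (x \<omega>)" using xuniq[OF \<omega>, of qs] qs nC CS by auto
        ultimately have gap: "\<Phi> \<omega> qs < \<Phi> \<omega> (x \<omega>)" by simp
        define \<delta> where "\<delta> = \<Phi> \<omega> (x \<omega>) - \<Phi> \<omega> qs"
        have \<delta>: "\<delta> > 0" unfolding \<delta>_def using gap by simp
        obtain n :: nat where n: "1 / Suc n < \<delta> / 2"
        proof -
          have "\<delta> / 2 > 0" using \<delta> by simp
          then obtain n :: nat where "inverse (real (Suc n)) < \<delta> / 2" using reals_Archimedean by blast
          hence "1 / real (Suc n) < \<delta> / 2" by (simp only: inverse_eq_divide)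
          thus ?thesis by (rule that)
        qed
        obtain q where q1: "q \<in> QC" and hq: "\<omega> \<in> (\<Inter>q'\<in>QS. {\<omega> \<in> space N. \<Phi> \<omega> q' \<le> \<Phi> \<omega> q + 1 / Suc n})"
          using Hn[of n] by (rule UN_E)
        have q: "q \<in> QC" "\<And>q'. q' \<in> QS \<Longrightarrow> \<Phi> \<omega> q' \<le> \<Phi> \<omega> q + 1 / Suc n"
          using q1 INT_D[OF hq] by auto
        obtain q' where q': "q' \<in> QS" "\<Phi> \<omega> (x \<omega>) - \<delta> / 2 < \<Phi> \<omega> q'"
          using approx_val[OF cont[OF \<omega>] xS[OF \<omega>] QS(2) QS(3)[OF xS[OF \<omega>]], of "\<delta> / 2"] \<delta> by auto
        have "\<Phi> \<omega> q \<le> \<Phi> \<omega> qs" using qs q QC by auto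
        thus False using q(2)[OF q'(1)] q'(2) n \<delta>_def by linarith
      qed
      thus "\<omega> \<in> {\<omega> \<in> space N. x \<omega> \<bullet> b \<le> c}" using \<omega> unfolding C_def by auto
    qed
    have "(\<Inter>n\<in>(UNIV::nat set). \<Union>q\<in>QC. \<Inter>q'\<in>QS. {\<omega> \<in> space N. \<Phi> \<omega> q' \<le> \<Phi> \<omega> q + 1 / Suc n}) \<in> sets N"
    proof (rule sets.countable_INT')
      show "countable (UNIV :: nat set)" by simp
      show "(UNIV :: nat set) \<noteq> {}" by simp
      show "(\<lambda>n. \<Union>q\<in>QC. \<Inter>q'\<in>QS. {\<omega> \<in> space N. \<Phi> \<omega> q' \<le> \<Phi> \<omega> q + 1 / Suc n}) ` UNIV \<subseteq> sets N"
      proof (rule image_subsetI, rule sets.countable_UN'')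
        fix n :: nat and q assume q: "q \<in> QC"
        show "(\<Inter>q'\<in>QS. {\<omega> \<in> space N. \<Phi> \<omega> q' \<le> \<Phi> \<omega> q + 1 / Suc n}) \<in> sets N"
        proof (rule sets.countable_INT')
          show "countable QS" "QS \<noteq> {}" using QS QSne by auto
          show "(\<lambda>q'. {\<omega> \<in> space N. \<Phi> \<omega> q' \<le> \<Phi> \<omega> q + 1 / Suc n}) ` QS \<subseteq> sets N"
          proof (rule image_subsetI)
            fix q' assume q': "q' \<in> QS"
            have [measurable]: "(\<lambda>\<omega>. \<Phi> \<omega> q') \<in> borel_measurable N" "(\<lambda>\<omega>. \<Phi> \<omega> q) \<in> borel_measurable N"
              using meas q q' QC(2) QS(2) CS by auto
            show "{\<omega> \<in> space N. \<Phi> \<omega> q' \<le> \<Phi> \<omega> q + 1 / Suc n} \<in> sets N" by measurable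
          qed
        qed
      qed (use QC in auto)
    qed
    thus ?thesis unfolding eq .
  qed
qed

lemma meas_cont_comp:
  fixes f :: "'a::euclidean_space \<Rightarrow> 'c::euclidean_space"
  assumes "continuous_on S f" "closed S" "h \<in> borel_measurable N" "\<And>\<omega>. \<omega> \<in> space N \<Longrightarrow> h \<omega> \<in> S"
  shows "(\<lambda>\<omega>. f (h \<omega>)) \<in> borel_measurable N"
proof -
  have 1: "(\<lambda>x. if x \<in> S then f x else 0) \<in> borel_measurable borel"
    using assms(1,2) by (intro borel_measurable_continuous_on_if) (auto simp: borel_closed)
  have "(\<lambda>\<omega>. (\<lambda>x. if x \<in> S then f x else 0) (h \<omega>)) \<in> borel_measurable N"
    using measurable_compose[OF assms(3) 1] by (simp add: o_def)
  thus ?thesis by (rule measurable_cong[THEN iffD1, rotated]) (use assms(4) in auto)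
qed



lemma vec_nth_meas: "(\<lambda>x::'a::euclidean_space^'n::finite. x $ i) \<in> borel_measurable borel"
  by (intro borel_measurable_continuous_onI linear_continuous_on bounded_linear_vec_nth)

lemma comp_meas: "f \<in> borel_measurable N \<Longrightarrow> (\<lambda>\<omega>. (f \<omega> :: 'a::euclidean_space^'n::finite) $ i) \<in> borel_measurable N"
  using measurable_compose[OF _ vec_nth_meas, of f N i] by (simp add: o_def)

lemma vec_meas:
  fixes f :: "'b \<Rightarrow> 'a::euclidean_space^'n::finite"
  assumes "\<And>i. (\<lambda>\<omega>. f \<omega> $ i) \<in> borel_measurable N"
  shows "f \<in> borel_measurable N"
  unfolding borel_measurable_euclidean_space[where f=f]
proof
  fix b :: "'a^'n" assume "b \<in> Basis"
  then obtain i u where b: "b = axis i u" "u \<in> Basis" unfolding Basis_vec_def by auto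
  have "(\<lambda>\<omega>. f \<omega> $ i \<bullet> u) \<in> borel_measurable N" using assms[of i] by measurable
  thus "(\<lambda>x. f x \<bullet> b) \<in> borel_measurable N" unfolding b inner_axis .
qed

lemma prof_closed: assumes "\<And>i. closed (X i)" shows "closed (profiles (X :: 'n::finite \<Rightarrow> 'a::euclidean_space set))"
proof -
  have "profiles X = (\<Inter>i. (\<lambda>p. p $ i) -` X i)" unfolding profiles_def by auto
  moreover have "closed ((\<lambda>p::'a^'n. p $ i) -` X i)" for i
    by (rule continuous_closed_vimage[OF assms]) (intro linear_continuous_at bounded_linear_vec_nth)
  ultimately show ?thesis by auto
qed

lemma lip_cont:
  fixes f :: "'a::metric_space \<Rightarrow> 'b::metric_space"
  assumes "\<And>p q. p \<in> S \<Longrightarrow> q \<in> S \<Longrightarrow> dist (f p) (f q) \<le> K * dist p q" "0 \<le> K"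
  shows "continuous_on S f"
  by (rule lipschitz_on_continuous_on[of K]) (rule lipschitz_onI, use assms in auto)

lemma log_sum_bound:
  fixes k th :: real
  assumes k: "k > 0" and th: "th > 0"
  shows "(\<Sum>s\<le>t. 1 / (k * real s + th)) \<le> 1 / th + 1 / k * ln (k / th * real t + 1)"
proof (induction t)
  case 0
  then show ?case by simp
next
  case (Suc t)
  define a where "a = k * real (Suc t) + th"
  have a: "a > k"
  proof -
    have "k * real (Suc t) = k + k * real t" by (simp add: algebra_simps)
    moreover have "0 \<le> k * real t" using k by simp
    ultimately show ?thesis unfolding a_def using th by linarith
  qed
  have A: "1 / a \<le> 1 / k * (ln a - ln (a - k))"
  proof -
    have "ln ((a - k) / a) \<le> (a - k) / a - 1" using a k by (intro ln_le_minus_one) simp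
    also have "\<dots> = - (k / a)" using a k by (simp add: field_simps)
    finally have "ln (a - k) - ln a \<le> - (k / a)" using a k by (simp add: ln_div)
    hence "k / a \<le> ln a - ln (a - k)" by simp
    hence "1 / k * (k / a) \<le> 1 / k * (ln a - ln (a - k))" using k by (intro mult_left_mono) auto
    thus ?thesis using k by simp
  qed
  have B: "ln (k / th * real (Suc t) + 1) = ln a - ln th"
  proof -
    have "k / th * real (Suc t) + 1 = a / th" unfolding a_def using th by (simp add: field_simps)
    moreover have "ln (a / th) = ln a - ln th" using a k th by (simp add: ln_div)
    ultimately show ?thesis by simp
  qed
  have C: "ln (k / th * real t + 1) = ln (a - k) - ln th"
  proof -
    have "k / th * real t + 1 = (a - k) / th" unfolding a_def using th by (simp add: field_simps)
    moreover have "ln ((a - k) / th) = ln (a - k) - ln th" using a k th by (simp add: ln_div)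
    ultimately show ?thesis by simp
  qed
  have E: "1 / k * ln (k / th * real (Suc t) + 1) = 1 / k * ln (k / th * real t + 1) + 1 / k * (ln a - ln (a - k))"
    unfolding B C by (simp add: algebra_simps)
  have F: "(\<Sum>s\<le>Suc t. 1 / (k * real s + th)) = (\<Sum>s\<le>t. 1 / (k * real s + th)) + 1 / a"
    unfolding a_def by simp
  show ?case unfolding F E using Suc.IH A by linarith
qed


lemma dir_meas:
  fixes f :: "'a::euclidean_space \<Rightarrow> real" and y :: "'b \<Rightarrow> 'a"
  assumes der: "\<And>z. z \<in> S \<Longrightarrow> (f has_derivative (\<lambda>h. inner (df z) h)) (at z within S)"
    and cS: "convex S" and clS: "closed S" and fc: "continuous_on S f" and w: "w \<in> S"
    and ym: "y \<in> borel_measurable N" and yS: "\<And>\<omega>. \<omega> \<in> space N \<Longrightarrow> y \<omega> \<in> S"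
  shows "(\<lambda>\<omega>. inner (df (y \<omega>)) (w - y \<omega>)) \<in> borel_measurable N"
proof (rule borel_measurable_LIMSEQ_real)
  define t where "t = (\<lambda>n::nat. 1 / real (Suc n))"
  have tpos: "\<And>n. t n > 0" unfolding t_def by simp
  have tle: "\<And>n. t n \<le> 1" unfolding t_def by simp
  have tlim: "filterlim t (at_right 0) sequentially"
  proof (rule tendsto_imp_filterlim_at_right)
    show "(t \<longlongrightarrow> 0) sequentially" unfolding t_def using LIMSEQ_inverse_real_of_nat by (simp add: inverse_eq_divide)
    show "\<forall>\<^sub>F x in sequentially. 0 < t x" using tpos by simp
  qed
  show "(\<lambda>n. (f (y \<omega> + t n *\<^sub>R (w - y \<omega>)) - f (y \<omega>)) / t n) \<longlonglongrightarrow> inner (df (y \<omega>)) (w - y \<omega>)"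
    if \<omega>: "\<omega> \<in> space N" for \<omega>
    using filterlim_compose[OF dir_quot_tendsto[OF der[OF yS[OF \<omega>]] cS yS[OF \<omega>] w] tlim] by (simp add: o_def)
  show "(\<lambda>\<omega>. (f (y \<omega> + t n *\<^sub>R (w - y \<omega>)) - f (y \<omega>)) / t n) \<in> borel_measurable N" for n
  proof -
    have inS: "y \<omega> + t n *\<^sub>R (w - y \<omega>) \<in> S" if \<omega>: "\<omega> \<in> space N" for \<omega>
    proof -
      have "y \<omega> + t n *\<^sub>R (w - y \<omega>) = (1 - t n) *\<^sub>R y \<omega> + t n *\<^sub>R w" by (simp add: algebra_simps)
      thus ?thesis using convexD_alt[OF cS yS[OF \<omega>] w, of "t n"] tpos[of n] tle[of n] by simp
    qed
    have m1: "(\<lambda>\<omega>. y \<omega> + t n *\<^sub>R (w - y \<omega>)) \<in> borel_measurable N" using ym by measurable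
    have "(\<lambda>\<omega>. f (y \<omega> + t n *\<^sub>R (w - y \<omega>))) \<in> borel_measurable N"
      by (rule meas_cont_comp[OF fc clS m1 inS])
    moreover have "(\<lambda>\<omega>. f (y \<omega>)) \<in> borel_measurable N" by (rule meas_cont_comp[OF fc clS ym yS])
    ultimately show ?thesis by measurable
  qed
qed

lemma uniq_max:
  fixes psi :: "'a::real_inner \<Rightarrow> real"
  assumes sc: "strongly_convex_on S \<rho> psi" and rho: "\<rho> > 0" and w: "w \<in> S" and x: "x \<in> S"
    and mx: "\<And>z. z \<in> S \<Longrightarrow> inner a (z - y) - psi z \<le> inner a (x - y) - psi x"
    and eq: "inner a (w - y) - psi w = inner a (x - y) - psi x"
  shows "w = x"
proof (rule ccontr)
  assume ne: "w \<noteq> x"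
  define m where "m = (1 - 1/2) *\<^sub>R w + (1/2::real) *\<^sub>R x"
  have cS: "convex S" using sc unfolding strongly_convex_on_def by simp
  have mS: "m \<in> S" unfolding m_def by (rule convexD_alt[OF cS w x]) auto
  have psim: "psi m \<le> (1 - 1/2) * psi w + (1/2) * psi x - \<rho> / 2 * (1/2) * (1 - 1/2) * (norm (w - x))\<^sup>2"
  proof -
    have H: "\<forall>x\<in>S. \<forall>y\<in>S. \<forall>t::real. 0 \<le> t \<and> t \<le> 1 \<longrightarrow>
        psi ((1 - t) *\<^sub>R x + t *\<^sub>R y) \<le> (1 - t) * psi x + t * psi y - \<rho> / 2 * t * (1 - t) * (norm (x - y))\<^sup>2"
      using sc unfolding strongly_convex_on_def by blast
    show ?thesis unfolding m_def by (rule H[rule_format]) (use w x in auto)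
  qed
  have pos: "0 < \<rho> / 2 * (1/2) * (1 - 1/2) * (norm (w - x))\<^sup>2" using rho ne by simp
  have lin: "inner a (m - y) = (1/2) * inner a (w - y) + (1/2) * inner a (x - y)"
  proof -
    have hh: "(1/2::real) *\<^sub>R y + (1/2::real) *\<^sub>R y = y" by (simp flip: scaleR_add_left)
    have "(1/2::real) *\<^sub>R (w - y) + (1/2::real) *\<^sub>R (x - y) = (1 - 1/2) *\<^sub>R w + (1/2::real) *\<^sub>R x - ((1/2::real) *\<^sub>R y + (1/2::real) *\<^sub>R y)"
      by (simp add: algebra_simps)
    hence "m - y = (1/2::real) *\<^sub>R (w - y) + (1/2::real) *\<^sub>R (x - y)" unfolding m_def hh by simp
    thus ?thesis by (simp add: inner_add_right)
  qed
  have "inner a (m - y) - psi m > inner a (x - y) - psi x"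
    using psim pos lin eq by simp
  thus False using mx[OF mS] by simp
qed

lemma final_alg: "(r::real) \<noteq> 0 \<Longrightarrow> d \<noteq> 0 \<Longrightarrow> (a * A + n / r * L) / d = a / d * A + n / (r * d) * L"
  by (simp add: field_simps)
theorem theorem5:
  fixes M :: "'b measure"
    and X :: "'n::finite \<Rightarrow> 'a::euclidean_space set"
    and v :: "'n \<Rightarrow> 'a^'n \<Rightarrow> real"
    and dv :: "'n \<Rightarrow> 'a^'n \<Rightarrow> 'a"
    and psi :: "'a \<Rightarrow> real" and dpsi :: "'a \<Rightarrow> 'a"
    and G :: "'a \<Rightarrow> 'a \<Rightarrow> real" and dG :: "'a \<Rightarrow> 'a \<Rightarrow> 'a"
    and L \<rho> \<beta> \<gamma> \<mu> C theta kappa :: real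
    and eta :: "nat \<Rightarrow> real"
    and \<sigma> pmu pi0 :: "'a^'n"
    and \<xi> :: "'n \<Rightarrow> nat \<Rightarrow> 'b \<Rightarrow> 'a"
    and pi :: "nat \<Rightarrow> 'b \<Rightarrow> 'a^'n"
    and t :: nat
  assumes M: "prob_space M"
    \<comment> \<open>strategy sets\<close>
    and X_ne: "\<And>i. X i \<noteq> {}" and X_compact: "\<And>i. compact (X i)" and X_convex: "\<And>i. convex (X i)"
    \<comment> \<open>payoffs differentiable, dv i p is the block gradient of v i in player i's coordinate\<close>
    and v_diff: "\<And>i p. p \<in> profiles X \<Longrightarrow> v i differentiable (at p within profiles X)"
    and v_grad: "\<And>i p. p \<in> profiles X \<Longrightarrow>
        ((\<lambda>x. v i (upd p i x)) has_derivative (\<lambda>h. inner (dv i p) h)) (at (p $ i) within X i)"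
    \<comment> \<open>monotone game\<close>
    and monotone: "\<And>p q. p \<in> profiles X \<Longrightarrow> q \<in> profiles X \<Longrightarrow>
        (\<Sum>i\<in>UNIV. inner (dv i p - dv i q) (p $ i - q $ i)) \<le> 0"
    \<comment> \<open>L-smooth game\<close>
    and smooth: "\<And>p q. p \<in> profiles X \<Longrightarrow> q \<in> profiles X \<Longrightarrow>
        (\<Sum>i\<in>UNIV. (norm (dv i p - dv i q))\<^sup>2) \<le> L\<^sup>2 * (norm (p - q))\<^sup>2"
    \<comment> \<open>regularizer\<close>
    and psi_grad: "\<And>i y. y \<in> X i \<Longrightarrow> (psi has_derivative (\<lambda>h. inner (dpsi y) h)) (at y within X i)"
    and rho_pos: "\<rho> > 0"
    and psi_sc: "\<And>i. strongly_convex_on (X i) \<rho> psi"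
    \<comment> \<open>perturbation function\<close>
    and G_nonneg: "\<And>i x s. x \<in> X i \<Longrightarrow> s \<in> X i \<Longrightarrow> G x s \<ge> 0"
    and G_zero: "\<And>i s. s \<in> X i \<Longrightarrow> G s s = 0"
    and G_strict: "\<And>i s. s \<in> X i \<Longrightarrow> strict_convex_on' (X i) (\<lambda>x. G x s)"
    and G_grad: "\<And>i s y. s \<in> X i \<Longrightarrow> y \<in> X i \<Longrightarrow>
        ((\<lambda>x. G x s) has_derivative (\<lambda>h. inner (dG y s) h)) (at y within X i)"
    \<comment> \<open>Assumption A\<close>
    and beta_pos: "\<beta> > 0" and gamma_pos: "\<gamma> > 0"
    and assmA: "\<And>i s p q. s \<in> X i \<Longrightarrow> p \<in> X i \<Longrightarrow> q \<in> X i \<Longrightarrow>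
        \<gamma> * bregman psi dpsi q p \<le> G q s - G p s - inner (dG p s) (q - p)
        \<and> G q s - G p s - inner (dG p s) (q - p) \<le> \<beta> * bregman psi dpsi q p"
    \<comment> \<open>perturbed equilibrium\<close>
    and mu_pos: "\<mu> > 0"
    and sigma_in: "\<sigma> \<in> profiles X"
    and pmu_in: "pmu \<in> profiles X"
    and pmu_eq: "\<And>i x. x \<in> X i \<Longrightarrow>
        v i (upd pmu i x) - \<mu> * G x (\<sigma> $ i) \<le> v i pmu - \<mu> * G (pmu $ i) (\<sigma> $ i)"
    \<comment> \<open>parameters and learning rates\<close>
    and theta_def: "theta = (\<mu>\<^sup>2 * \<gamma> * \<rho>\<^sup>2 * (\<gamma> + 2 * \<beta>) + 8 * L\<^sup>2) / (2 * \<mu> * \<gamma> * \<rho>\<^sup>2)"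
    and kappa_def: "kappa = \<mu> * \<gamma> / 2"
    and eta_def: "\<And>s. eta s = 1 / (kappa * real s + 2 * theta)"
    \<comment> \<open>MD-SP with noisy feedback\<close>
    and xi_meas: "\<And>i s. \<xi> i s \<in> borel_measurable M"
    and pi0_in: "pi0 \<in> profiles X"
    and pi_init: "\<And>\<omega>. \<omega> \<in> space M \<Longrightarrow> pi 0 \<omega> = pi0"
    and pi_step: "\<And>s \<omega> i. \<omega> \<in> space M \<Longrightarrow>
        pi (Suc s) \<omega> $ i \<in> X i \<and>
        (\<forall>x\<in>X i.
           eta s * inner (dv i (pi s \<omega>) + \<xi> i s \<omega> - \<mu> *\<^sub>R dG (pi s \<omega> $ i) (\<sigma> $ i)) x
             - bregman psi dpsi x (pi s \<omega> $ i)
           \<le> eta s * inner (dv i (pi s \<omega>) + \<xi> i s \<omega> - \<mu> *\<^sub>R dG (pi s \<omega> $ i) (\<sigma> $ i)) (pi (Suc s) \<omega> $ i)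
             - bregman psi dpsi (pi (Suc s) \<omega> $ i) (pi s \<omega> $ i))"
    \<comment> \<open>Assumption B, w.r.t. the sigma-algebra generated by the feedback before round s\<close>
    and noise_mean: "\<And>i s b. b \<in> Basis \<Longrightarrow>
        AE \<omega> in M. real_cond_exp M
          (feedback_filtration M (\<lambda>j r \<omega>'. dv j (pi r \<omega>') + \<xi> j r \<omega>') s)
          (\<lambda>\<omega>'. inner (\<xi> i s \<omega>') b) \<omega> = 0"
    and noise_var: "\<And>i s.
        AE \<omega> in M. nn_cond_exp M
          (feedback_filtration M (\<lambda>j r \<omega>'. dv j (pi r \<omega>') + \<xi> j r \<omega>') s)
          (\<lambda>\<omega>'. ennreal ((norm (\<xi> i s \<omega>'))\<^sup>2)) \<omega> \<le> ennreal (C\<^sup>2)"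
  shows "(\<integral>\<^sup>+ \<omega>. ennreal (bregman_prof psi dpsi pmu (pi (Suc t) \<omega>)) \<partial>M)
    \<le> ennreal ((2 * theta - kappa) / (kappa * real t + 2 * theta) * bregman_prof psi dpsi pmu pi0
        + real CARD('n) * C\<^sup>2 / (\<rho> * (kappa * real t + 2 * theta))
          * (1 / kappa * ln (kappa / (2 * theta) * real t + 1) + 1 / (2 * theta)))"
proof -
  interpret P: prob_space M by (rule M)
  have kappa_pos: "kappa > 0" unfolding kappa_def using mu_pos gamma_pos by simp
  have two_theta: "2 * theta = \<mu> * (\<gamma> + 2 * \<beta>) + 8 * L\<^sup>2 / (\<mu> * \<gamma> * \<rho>\<^sup>2)"
    unfolding theta_def using mu_pos gamma_pos rho_pos by (simp add: field_simps power2_eq_square)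
  have theta_pos: "theta > 0"
  proof -
    have "0 < \<mu> * (\<gamma> + 2 * \<beta>)" using mu_pos gamma_pos beta_pos by simp
    moreover have "0 \<le> 8 * L\<^sup>2 / (\<mu> * \<gamma> * \<rho>\<^sup>2)" using mu_pos gamma_pos rho_pos by simp
    ultimately show ?thesis using two_theta by linarith
  qed
  have kt: "kappa \<le> 2 * theta"
  proof -
    have "kappa \<le> \<mu> * (\<gamma> + 2 * \<beta>)" unfolding kappa_def using mu_pos gamma_pos beta_pos by (simp add: field_simps)
    moreover have "0 \<le> 8 * L\<^sup>2 / (\<mu> * \<gamma> * \<rho>\<^sup>2)" using mu_pos gamma_pos rho_pos by simp
    ultimately show ?thesis using two_theta by linarith
  qed
  have den_pos: "\<And>s. kappa * real s + 2 * theta > 0"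
  proof -
    fix s
    have "0 \<le> kappa * real s" using kappa_pos by simp
    thus "kappa * real s + 2 * theta > 0" using theta_pos by linarith
  qed
  have eta_pos: "\<And>s. eta s > 0" unfolding eta_def using den_pos by simp
  have eta_le: "\<And>s. eta s * (\<mu> * (\<gamma> + 2 * \<beta>) + 8 * L\<^sup>2 / (\<mu> * \<gamma> * \<rho>\<^sup>2)) \<le> 1"
  proof -
    fix s
    have "2 * theta \<le> kappa * real s + 2 * theta" using kappa_pos by simp
    thus "eta s * (\<mu> * (\<gamma> + 2 * \<beta>) + 8 * L\<^sup>2 / (\<mu> * \<gamma> * \<rho>\<^sup>2)) \<le> 1"
      unfolding two_theta[symmetric] eta_def using den_pos[of s] by (simp add: field_simps)
  qed
  have Xclosed: "\<And>i. closed (X i)" using X_compact compact_imp_closed by blast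
  have psi_cont: "\<And>i. continuous_on (X i) psi"
    unfolding continuous_on_eq_continuous_within using has_derivative_continuous[OF psi_grad] by blast
  have G_cont: "\<And>i s. s \<in> X i \<Longrightarrow> continuous_on (X i) (\<lambda>x. G x s)"
    unfolding continuous_on_eq_continuous_within using has_derivative_continuous[OF G_grad] by blast
  have pclosed: "closed (profiles X)" by (rule prof_closed[OF Xclosed])
  have dv_cont: "\<And>i. continuous_on (profiles X) (dv i)"
  proof -
    fix i
    show "continuous_on (profiles X) (dv i)"
    proof (rule lip_cont[of _ _ "\<bar>L\<bar>"])
      fix p q assume p: "p \<in> profiles X" and q: "q \<in> profiles X"
      have "(norm (dv i p - dv i q))\<^sup>2 \<le> (\<Sum>j\<in>UNIV. (norm (dv j p - dv j q))\<^sup>2)"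
        by (rule member_le_sum) auto
      also have "\<dots> \<le> L\<^sup>2 * (norm (p - q))\<^sup>2" by (rule smooth[OF p q])
      also have "\<dots> = (\<bar>L\<bar> * norm (p - q))\<^sup>2" by (simp add: power_mult_distrib)
      finally have "norm (dv i p - dv i q) \<le> \<bar>L\<bar> * norm (p - q)"
        by (rule power2_le_imp_le) simp
      thus "dist (dv i p) (dv i q) \<le> \<bar>L\<bar> * dist p q" by (simp add: dist_norm)
    qed simp
  qed
  have D_lb: "\<And>i a b. a \<in> X i \<Longrightarrow> b \<in> X i \<Longrightarrow> \<rho> / 2 * (norm (a - b))\<^sup>2 \<le> bregman psi dpsi a b"
  proof -
    fix i a b assume a: "a \<in> X i" and b: "b \<in> X i"
    have "inner (dpsi b) (a - b) \<le> psi a - psi b - \<rho> / 2 * (norm (a - b))\<^sup>2"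
      using sc_grad[OF psi_sc psi_grad[OF b] a b] .
    thus "\<rho> / 2 * (norm (a - b))\<^sup>2 \<le> bregman psi dpsi a b" unfolding bregman_def by simp
  qed
  have pi_in: "\<And>s \<omega>. \<omega> \<in> space M \<Longrightarrow> pi s \<omega> \<in> profiles X"
  proof -
    fix s \<omega> assume \<omega>: "\<omega> \<in> space M"
    show "pi s \<omega> \<in> profiles X"
    proof (cases s)
      case 0 thus ?thesis using pi_init[OF \<omega>] pi0_in by simp
    next
      case (Suc r) thus ?thesis using pi_step[OF \<omega>, of r] unfolding profiles_def by auto
    qed
  qed
  have pi_comp: "\<And>s \<omega> i. \<omega> \<in> space M \<Longrightarrow> pi s \<omega> $ i \<in> X i"
    using pi_in unfolding profiles_def by auto
  have opt_x: "\<And>s \<omega> i z. \<omega> \<in> space M \<Longrightarrow> z \<in> X i \<Longrightarrow>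
      inner (eta s *\<^sub>R (dv i (pi s \<omega>) + \<xi> i s \<omega> - \<mu> *\<^sub>R dG (pi s \<omega> $ i) (\<sigma> $ i))
        - dpsi (pi (Suc s) \<omega> $ i) + dpsi (pi s \<omega> $ i)) (z - pi (Suc s) \<omega> $ i) \<le> 0"
  proof -
    fix s \<omega> i z assume \<omega>: "\<omega> \<in> space M" and z: "z \<in> X i"
    define g where "g = dv i (pi s \<omega>) + \<xi> i s \<omega> - \<mu> *\<^sub>R dG (pi s \<omega> $ i) (\<sigma> $ i)"
    define y where "y = pi s \<omega> $ i"
    define x where "x = pi (Suc s) \<omega> $ i"
    have x: "x \<in> X i" unfolding x_def by (rule pi_comp[OF \<omega>])
    have der: "((\<lambda>w. eta s * inner g w - bregman psi dpsi w y) has_derivative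
        (\<lambda>h. eta s * inner g h - (inner (dpsi x) h - inner (dpsi y) h))) (at x within X i)"
      unfolding bregman_def
      by (rule derivative_eq_intros psi_grad[OF x] refl | simp add: inner_diff_right)+
    have "(\<lambda>h. eta s * inner g h - (inner (dpsi x) h - inner (dpsi y) h)) (z - x) \<le> 0"
    proof (rule dir_max[OF der X_convex x z])
      fix w assume "w \<in> X i"
      thus "eta s * inner g w - bregman psi dpsi w y \<le> eta s * inner g x - bregman psi dpsi x y"
        using pi_step[OF \<omega>, of s i] unfolding g_def x_def y_def by blast
    qed
    hence "inner (eta s *\<^sub>R g - dpsi x + dpsi y) (z - x) \<le> 0"
      by (simp add: inner_diff_left inner_add_left)
    thus "inner (eta s *\<^sub>R (dv i (pi s \<omega>) + \<xi> i s \<omega> - \<mu> *\<^sub>R dG (pi s \<omega> $ i) (\<sigma> $ i))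
        - dpsi (pi (Suc s) \<omega> $ i) + dpsi (pi s \<omega> $ i)) (z - pi (Suc s) \<omega> $ i) \<le> 0"
      unfolding g_def x_def y_def .
  qed
  have upd_self: "\<And>i. upd pmu i (pmu $ i) = pmu" unfolding upd_def by (simp add: vec_eq_iff)
  have opt_p: "\<And>i z. z \<in> X i \<Longrightarrow> inner (dv i pmu - \<mu> *\<^sub>R dG (pmu $ i) (\<sigma> $ i)) (z - pmu $ i) \<le> 0"
  proof -
    fix i z assume z: "z \<in> X i"
    have p: "pmu $ i \<in> X i" using pmu_in unfolding profiles_def by auto
    have s: "\<sigma> $ i \<in> X i" using sigma_in unfolding profiles_def by auto
    have der: "((\<lambda>w. v i (upd pmu i w) - \<mu> * G w (\<sigma> $ i)) has_derivative
        (\<lambda>h. inner (dv i pmu) h - \<mu> * inner (dG (pmu $ i) (\<sigma> $ i)) h)) (at (pmu $ i) within X i)"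
      by (intro has_derivative_diff has_derivative_mult_right v_grad[OF pmu_in] G_grad[OF s p])
    have "(\<lambda>h. inner (dv i pmu) h - \<mu> * inner (dG (pmu $ i) (\<sigma> $ i)) h) (z - pmu $ i) \<le> 0"
    proof (rule dir_max[OF der X_convex p z])
      fix w assume "w \<in> X i"
      thus "v i (upd pmu i w) - \<mu> * G w (\<sigma> $ i) \<le> v i (upd pmu i (pmu $ i)) - \<mu> * G (pmu $ i) (\<sigma> $ i)"
        using pmu_eq[of w i] unfolding upd_self by simp
    qed
    thus "inner (dv i pmu - \<mu> *\<^sub>R dG (pmu $ i) (\<sigma> $ i)) (z - pmu $ i) \<le> 0"
      by (simp add: inner_diff_left)
  qed
  have step: "\<And>s \<omega>. \<omega> \<in> space M \<Longrightarrow> bregman_prof psi dpsi pmu (pi (Suc s) \<omega>) \<le>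
      (1 - eta s * kappa) * bregman_prof psi dpsi pmu (pi s \<omega>)
      + eta s * (\<Sum>i\<in>UNIV. inner (\<xi> i s \<omega>) (pi s \<omega> $ i - pmu $ i))
      + (eta s)\<^sup>2 / \<rho> * (\<Sum>i\<in>UNIV. (norm (\<xi> i s \<omega>))\<^sup>2)"
  proof -
    fix s \<omega> assume \<omega>: "\<omega> \<in> space M"
    show "?thesis s \<omega>" unfolding kappa_def
      by (rule det_step[OF pi_in[OF \<omega>] pi_in[OF \<omega>] pmu_in sigma_in D_lb opt_x[OF \<omega>] opt_p
            monotone[OF pi_in[OF \<omega>] pmu_in] smooth[OF pi_in[OF \<omega>] pmu_in] assmA
            eta_pos rho_pos mu_pos beta_pos gamma_pos eta_le])
  qed
  define Z where "Z = (\<lambda>s \<omega>. (\<Sum>i\<in>UNIV. inner (\<xi> i s \<omega>) (pi s \<omega> $ i - pmu $ i))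
      + eta s / \<rho> * (\<Sum>i\<in>UNIV. (norm (\<xi> i s \<omega>))\<^sup>2))"
  define W where "W = (\<lambda>n::nat. kappa * real n - kappa + 2 * theta)"
  have unroll: "\<And>n \<omega>. \<omega> \<in> space M \<Longrightarrow> W n * bregman_prof psi dpsi pmu (pi n \<omega>)
      \<le> W 0 * bregman_prof psi dpsi pmu pi0 + (\<Sum>s<n. Z s \<omega>)"
  proof -
    fix n \<omega> assume \<omega>: "\<omega> \<in> space M"
    show "W n * bregman_prof psi dpsi pmu (pi n \<omega>) \<le> W 0 * bregman_prof psi dpsi pmu pi0 + (\<Sum>s<n. Z s \<omega>)"
    proof (induction n)
      case 0 thus ?case using pi_init[OF \<omega>] by simp
    next
      case (Suc n)
      have WS: "W (Suc n) = kappa * real n + 2 * theta" unfolding W_def by (simp add: algebra_simps)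
      have e1: "W (Suc n) * eta n = 1" unfolding WS eta_def using den_pos[of n] by simp
      have e2: "W (Suc n) * (1 - eta n * kappa) = W n"
      proof -
        have "W (Suc n) * (1 - eta n * kappa) = W (Suc n) - kappa * (W (Suc n) * eta n)" by (simp add: algebra_simps)
        also have "\<dots> = W (Suc n) - kappa" using e1 by simp
        finally show ?thesis unfolding WS W_def by (simp add: algebra_simps)
      qed
      have "W (Suc n) * bregman_prof psi dpsi pmu (pi (Suc n) \<omega>) \<le> W (Suc n) * ((1 - eta n * kappa) * bregman_prof psi dpsi pmu (pi n \<omega>)
        + eta n * (\<Sum>i\<in>UNIV. inner (\<xi> i n \<omega>) (pi n \<omega> $ i - pmu $ i))
        + (eta n)\<^sup>2 / \<rho> * (\<Sum>i\<in>UNIV. (norm (\<xi> i n \<omega>))\<^sup>2))"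
        using step[OF \<omega>, of n] den_pos[of n] unfolding WS by (intro mult_left_mono) auto
      also have "\<dots> = W n * bregman_prof psi dpsi pmu (pi n \<omega>) + Z n \<omega>"
      proof -
        let ?B = "bregman_prof psi dpsi pmu (pi n \<omega>)"
        let ?E1 = "\<Sum>i\<in>UNIV. inner (\<xi> i n \<omega>) (pi n \<omega> $ i - pmu $ i)"
        let ?E2 = "\<Sum>i\<in>UNIV. (norm (\<xi> i n \<omega>))\<^sup>2"
        have e3: "W (Suc n) * ((eta n)\<^sup>2 / \<rho>) = eta n / \<rho>"
        proof -
          have "W (Suc n) * ((eta n)\<^sup>2 / \<rho>) = (W (Suc n) * eta n) * eta n / \<rho>" by (simp add: power2_eq_square)
          thus ?thesis using e1 by simp
        qed
        have "W (Suc n) * ((1 - eta n * kappa) * ?B + eta n * ?E1 + (eta n)\<^sup>2 / \<rho> * ?E2)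
          = (W (Suc n) * (1 - eta n * kappa)) * ?B + (W (Suc n) * eta n) * ?E1 + (W (Suc n) * ((eta n)\<^sup>2 / \<rho>)) * ?E2"
          by (simp only: distrib_left mult.assoc)
        also have "\<dots> = W n * ?B + ?E1 + eta n / \<rho> * ?E2" unfolding e1 e2 e3 by simp
        finally show ?thesis unfolding Z_def by simp
      qed
      finally show ?case using Suc.IH by simp
    qed
  qed
  define fb where "fb = (\<lambda>j r \<omega>'. dv j (pi r \<omega>') + \<xi> j r \<omega>')"
  define Gen where "Gen = (\<lambda>s. {fb i r -` A \<inter> space M | i r A. r < s \<and> A \<in> sets borel})"
  define F where "F = feedback_filtration M (\<lambda>j r \<omega>'. dv j (pi r \<omega>') + \<xi> j r \<omega>')"
  have F_eq: "\<And>s. F s = sigma (space M) (Gen s)"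
    unfolding F_def feedback_filtration_def Gen_def fb_def by simp
  have Gen_sub: "\<And>s. Gen s \<subseteq> Pow (space M)" unfolding Gen_def by auto
  have sets_F: "\<And>s. sets (F s) = sigma_sets (space M) (Gen s)"
    unfolding F_eq using sets_measure_of[OF Gen_sub] by simp
  have space_F: "\<And>s. space (F s) = space M" unfolding F_eq by (simp add: space_measure_of_conv)
  have fb_F: "\<And>i r s. r < s \<Longrightarrow> fb i r \<in> borel_measurable (F s)"
  proof -
    fix i :: 'n and r s :: nat assume rs: "r < s"
    show "fb i r \<in> borel_measurable (F s)"
    proof (rule measurableI)
      fix A :: "'a set" assume A: "A \<in> sets borel"
      have "fb i r -` A \<inter> space M \<in> Gen s" unfolding Gen_def using rs A by blast
      thus "fb i r -` A \<inter> space (F s) \<in> sets (F s)" unfolding sets_F space_F by (rule sigma_sets.Basic)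
    qed simp
  qed
  have F_mono: "\<And>s s'. s \<le> s' \<Longrightarrow> subalgebra (F s') (F s)"
  proof -
    fix s s' :: nat assume ss: "s \<le> s'"
    have "Gen s \<subseteq> Gen s'" unfolding Gen_def using ss by fastforce
    hence "Gen s \<subseteq> sigma_sets (space M) (Gen s')" using sigma_sets.Basic by blast
    hence "sigma_sets (space M) (Gen s) \<subseteq> sigma_sets (space M) (Gen s')" by (rule sigma_sets_mono)
    thus "subalgebra (F s') (F s)" unfolding subalgebra_def sets_F space_F by simp
  qed
  have F_sub: "\<And>s. (\<And>r i. r < s \<Longrightarrow> fb i r \<in> borel_measurable M) \<Longrightarrow> subalgebra M (F s)"
  proof -
    fix s :: nat assume h: "\<And>r i. r < s \<Longrightarrow> fb i r \<in> borel_measurable M"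
    have "Gen s \<subseteq> sets M" unfolding Gen_def using h measurable_sets by blast
    hence "sigma_sets (space M) (Gen s) \<subseteq> sets M" by (rule sets.sigma_sets_subset)
    thus "subalgebra M (F s)" unfolding subalgebra_def sets_F space_F by simp
  qed
  have MEAS: "pi s \<in> borel_measurable (F s) \<and> (\<forall>r<s. \<forall>i. fb i r \<in> borel_measurable M)" for s
  proof (induction s)
    case 0
    have "(\<lambda>\<omega>. pi0) \<in> borel_measurable (F 0)" by simp
    hence "pi 0 \<in> borel_measurable (F 0)"
      by (rule measurable_cong[THEN iffD1, rotated]) (use pi_init space_F in auto)
    thus ?case by simp
  next
    case (Suc s)
    have pim: "pi s \<in> borel_measurable (F s)" and fbm: "\<And>r i. r < s \<Longrightarrow> fb i r \<in> borel_measurable M"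
      using Suc.IH by auto
    have subM: "subalgebra M (F s)" by (rule F_sub[OF fbm])
    have piM: "pi s \<in> borel_measurable M" by (rule measurable_from_subalg[OF subM pim])
    have fbs: "fb i s \<in> borel_measurable M" for i
    proof -
      have "(\<lambda>\<omega>. dv i (pi s \<omega>)) \<in> borel_measurable M" by (rule meas_cont_comp[OF dv_cont pclosed piM pi_in])
      thus ?thesis unfolding fb_def using xi_meas[of i s] by measurable
    qed
    have fbM: "\<forall>r<Suc s. \<forall>i. fb i r \<in> borel_measurable M" using fbm fbs less_Suc_eq by auto
    have piN: "pi s \<in> borel_measurable (F (Suc s))" by (rule measurable_from_subalg[OF F_mono pim]) simp
    have fbN: "fb i s \<in> borel_measurable (F (Suc s))" for i by (rule fb_F) simp
    have "pi (Suc s) \<in> borel_measurable (F (Suc s))"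
    proof (rule vec_meas)
      fix i
      let ?N = "F (Suc s)"
      define y where "y = (\<lambda>\<omega>. pi s \<omega> $ i)"
      have ym: "y \<in> borel_measurable ?N" unfolding y_def by (rule comp_meas[OF piN])
      have yX: "\<And>\<omega>. \<omega> \<in> space ?N \<Longrightarrow> y \<omega> \<in> X i" unfolding y_def space_F by (rule pi_comp)
      have si: "\<sigma> $ i \<in> X i" using sigma_in unfolding profiles_def by auto
      define Phi where "Phi = (\<lambda>\<omega> w. eta s * inner (fb i s \<omega>) (w - y \<omega>)
          - (eta s * \<mu>) * inner (dG (y \<omega>) (\<sigma> $ i)) (w - y \<omega>) + inner (dpsi (y \<omega>)) (w - y \<omega>) - psi w + psi (y \<omega>))"
      define a where "a = (\<lambda>\<omega>. eta s *\<^sub>R fb i s \<omega> - (eta s * \<mu>) *\<^sub>R dG (y \<omega>) (\<sigma> $ i) + dpsi (y \<omega>))"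
      have Phi_a: "Phi \<omega> w = inner (a \<omega>) (w - y \<omega>) - psi w + psi (y \<omega>)" for \<omega> w
        unfolding Phi_def a_def by (simp add: inner_add_left inner_diff_left)
      have Phi_J: "Phi \<omega> w = (eta s * inner (dv i (pi s \<omega>) + \<xi> i s \<omega> - \<mu> *\<^sub>R dG (pi s \<omega> $ i) (\<sigma> $ i)) w
            - bregman psi dpsi w (pi s \<omega> $ i))
          + (- eta s * inner (fb i s \<omega>) (y \<omega>) + eta s * \<mu> * inner (dG (y \<omega>) (\<sigma> $ i)) (y \<omega>))" for \<omega> w
        unfolding Phi_def bregman_def fb_def y_def
        by (simp add: inner_diff_right inner_diff_left inner_add_left algebra_simps)
      show "(\<lambda>\<omega>. pi (Suc s) \<omega> $ i) \<in> borel_measurable ?N"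
      proof (rule argmax_meas[where S="X i" and \<Phi>=Phi])
        show "compact (X i)" by (rule X_compact)
        show "continuous_on (X i) (Phi \<omega>)" for \<omega>
          unfolding Phi_def by (intro continuous_intros psi_cont)
        show "(\<lambda>\<omega>. Phi \<omega> w) \<in> borel_measurable ?N" if w: "w \<in> X i" for w
        proof -
          have m1: "(\<lambda>\<omega>. inner (dG (y \<omega>) (\<sigma> $ i)) (w - y \<omega>)) \<in> borel_measurable ?N"
            by (rule dir_meas[OF G_grad[OF si] X_convex Xclosed G_cont[OF si] w ym yX])
          have m2: "(\<lambda>\<omega>. inner (dpsi (y \<omega>)) (w - y \<omega>)) \<in> borel_measurable ?N"
            by (rule dir_meas[OF psi_grad X_convex Xclosed psi_cont w ym yX])
          have m3: "(\<lambda>\<omega>. psi (y \<omega>)) \<in> borel_measurable ?N" by (rule meas_cont_comp[OF psi_cont Xclosed ym yX])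
          have m4: "fb i s \<in> borel_measurable ?N" by (rule fbN)
          show ?thesis unfolding Phi_def using m1 m2 m3 m4 ym by measurable
        qed
        show "pi (Suc s) \<omega> $ i \<in> X i" if "\<omega> \<in> space ?N" for \<omega>
          using pi_comp that unfolding space_F by blast
        show "Phi \<omega> w \<le> Phi \<omega> (pi (Suc s) \<omega> $ i)" if \<omega>: "\<omega> \<in> space ?N" and w: "w \<in> X i" for \<omega> w
          unfolding Phi_J using pi_step[of \<omega> s i] \<omega> w unfolding space_F by auto
        show "w = pi (Suc s) \<omega> $ i" if \<omega>: "\<omega> \<in> space ?N" and w: "w \<in> X i"
          and eq: "Phi \<omega> w = Phi \<omega> (pi (Suc s) \<omega> $ i)" for \<omega> w
        proof (rule uniq_max[OF psi_sc rho_pos w pi_comp])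
          show "\<omega> \<in> space M" using \<omega> unfolding space_F .
          show "inner (a \<omega>) (z - y \<omega>) - psi z \<le> inner (a \<omega>) (pi (Suc s) \<omega> $ i - y \<omega>) - psi (pi (Suc s) \<omega> $ i)"
            if z: "z \<in> X i" for z
          proof -
            have "Phi \<omega> z \<le> Phi \<omega> (pi (Suc s) \<omega> $ i)"
              unfolding Phi_J using pi_step[of \<omega> s i] \<omega> z unfolding space_F by auto
            thus ?thesis unfolding Phi_a by simp
          qed
          show "inner (a \<omega>) (w - y \<omega>) - psi w = inner (a \<omega>) (pi (Suc s) \<omega> $ i - y \<omega>) - psi (pi (Suc s) \<omega> $ i)"
            using eq unfolding Phi_a by simp
        qed
      qed
    qed
    thus ?case using fbM by simp
  qed
  have piF: "\<And>s. pi s \<in> borel_measurable (F s)" using MEAS by blast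
  have subM: "\<And>s. subalgebra M (F s)" using MEAS F_sub by blast
  have piM: "\<And>s. pi s \<in> borel_measurable M" using measurable_from_subalg[OF subM piF] by blast
  have SF: "\<And>s. sigma_finite_subalgebra M (F s)"
  proof -
    fix s
    have "finite_measure_subalgebra M (F s)"
      unfolding finite_measure_subalgebra_def finite_measure_subalgebra_axioms_def
      using P.finite_measure_axioms subM by simp
    thus "sigma_finite_subalgebra M (F s)" by (rule finite_measure_subalgebra_is_sigma_finite)
  qed
  have "compact (\<Union>i\<in>UNIV. X i)" by (rule compact_UN) (auto intro: X_compact)
  then obtain K where K: "\<And>i z. z \<in> X i \<Longrightarrow> norm z \<le> K"
    using compact_imp_bounded bounded_iff by (metis UN_I UNIV_I)
  have diff_bd: "\<And>s \<omega> i. \<omega> \<in> space M \<Longrightarrow> norm (pi s \<omega> $ i - pmu $ i) \<le> 2 * K"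
  proof -
    fix s \<omega> i assume \<omega>: "\<omega> \<in> space M"
    have "norm (pi s \<omega> $ i - pmu $ i) \<le> norm (pi s \<omega> $ i) + norm (pmu $ i)" by (rule norm_triangle_ineq4)
    moreover have "norm (pi s \<omega> $ i) \<le> K" using K pi_comp[OF \<omega>] by blast
    moreover have "norm (pmu $ i) \<le> K" using K pmu_in unfolding profiles_def by blast
    ultimately show "norm (pi s \<omega> $ i - pmu $ i) \<le> 2 * K" by simp
  qed
  have K0: "0 \<le> K" using X_ne K norm_ge_zero order_trans by (metis ex_in_conv)
  have xi2: "\<And>i s. integrable M (\<lambda>\<omega>. (norm (\<xi> i s \<omega>))\<^sup>2) \<and> (\<integral>\<omega>. (norm (\<xi> i s \<omega>))\<^sup>2 \<partial>M) \<le> C\<^sup>2"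
  proof -
    fix i s
    interpret SFs: sigma_finite_subalgebra M "F s" by (rule SF)
    have gm: "(\<lambda>\<omega>. ennreal ((norm (\<xi> i s \<omega>))\<^sup>2)) \<in> borel_measurable M" using xi_meas[of i s] by measurable
    have "(\<integral>\<^sup>+\<omega>. ennreal ((norm (\<xi> i s \<omega>))\<^sup>2) \<partial>M) = (\<integral>\<^sup>+\<omega>. 1 * ennreal ((norm (\<xi> i s \<omega>))\<^sup>2) \<partial>M)" by simp
    also have "\<dots> = (\<integral>\<^sup>+\<omega>. 1 * nn_cond_exp M (F s) (\<lambda>\<omega>. ennreal ((norm (\<xi> i s \<omega>))\<^sup>2)) \<omega> \<partial>M)"
      by (rule SFs.nn_cond_exp_intg[symmetric]) (auto simp: gm)
    also have "\<dots> \<le> (\<integral>\<^sup>+\<omega>. ennreal (C\<^sup>2) \<partial>M)"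
      using noise_var[where i=i and s=s] unfolding F_def[symmetric] by (intro nn_integral_mono_AE) auto
    also have "\<dots> = ennreal (C\<^sup>2)" by (simp add: P.emeasure_space_1)
    finally have nnb: "(\<integral>\<^sup>+\<omega>. ennreal ((norm (\<xi> i s \<omega>))\<^sup>2) \<partial>M) \<le> ennreal (C\<^sup>2)" .
    have int: "integrable M (\<lambda>\<omega>. (norm (\<xi> i s \<omega>))\<^sup>2)"
    proof (rule integrableI_nonneg)
      show "(\<lambda>\<omega>. (norm (\<xi> i s \<omega>))\<^sup>2) \<in> borel_measurable M" using xi_meas[of i s] by measurable
      show "AE \<omega> in M. 0 \<le> (norm (\<xi> i s \<omega>))\<^sup>2" by simp
      show "(\<integral>\<^sup>+\<omega>. ennreal ((norm (\<xi> i s \<omega>))\<^sup>2) \<partial>M) < \<infinity>"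
        using le_less_trans[OF nnb ennreal_less_top] by simp
    qed
    have "ennreal (\<integral>\<omega>. (norm (\<xi> i s \<omega>))\<^sup>2 \<partial>M) = (\<integral>\<^sup>+\<omega>. ennreal ((norm (\<xi> i s \<omega>))\<^sup>2) \<partial>M)"
      by (rule nn_integral_eq_integral[symmetric]) (use int in auto)
    hence "ennreal (\<integral>\<omega>. (norm (\<xi> i s \<omega>))\<^sup>2 \<partial>M) \<le> ennreal (C\<^sup>2)" using nnb by simp
    hence "(\<integral>\<omega>. (norm (\<xi> i s \<omega>))\<^sup>2 \<partial>M) \<le> C\<^sup>2" by (simp add: ennreal_le_iff)
    thus "integrable M (\<lambda>\<omega>. (norm (\<xi> i s \<omega>))\<^sup>2) \<and> (\<integral>\<omega>. (norm (\<xi> i s \<omega>))\<^sup>2 \<partial>M) \<le> C\<^sup>2" using int by simp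
  qed
  \<comment> \<open>the noise is a martingale difference\<close>
  have xi1: "\<And>i s. integrable M (\<lambda>\<omega>. inner (\<xi> i s \<omega>) (pi s \<omega> $ i - pmu $ i))
      \<and> (\<integral>\<omega>. inner (\<xi> i s \<omega>) (pi s \<omega> $ i - pmu $ i) \<partial>M) = 0"
  proof -
    fix i s
    interpret SFs: sigma_finite_subalgebra M "F s" by (rule SF)
    define B where "B = (\<lambda>\<omega>. 2 * K * (1 + (norm (\<xi> i s \<omega>))\<^sup>2))"
    have Bint: "integrable M B" unfolding B_def using xi2[of i s] by (intro Bochner_Integration.integrable_mult_right Bochner_Integration.integrable_add) auto
    have nb: "norm (\<xi> i s \<omega>) \<le> 1 + (norm (\<xi> i s \<omega>))\<^sup>2" for \<omega>
    proof -
      have "0 \<le> (norm (\<xi> i s \<omega>) - 1/2)\<^sup>2" by simp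
      thus ?thesis by (simp add: power2_eq_square algebra_simps)
    qed
    have termb: "integrable M (\<lambda>\<omega>. inner (pi s \<omega> $ i - pmu $ i) b * inner (\<xi> i s \<omega>) b)
        \<and> (\<integral>\<omega>. inner (pi s \<omega> $ i - pmu $ i) b * inner (\<xi> i s \<omega>) b \<partial>M) = 0" if b: "b \<in> Basis" for b
    proof -
      have Ym: "(\<lambda>\<omega>. inner (pi s \<omega> $ i - pmu $ i) b) \<in> borel_measurable (F s)"
        using comp_meas[OF piF[of s], of i] by measurable
      have xbm: "(\<lambda>\<omega>. inner (\<xi> i s \<omega>) b) \<in> borel_measurable M" using xi_meas[of i s] by measurable
      have YmM: "(\<lambda>\<omega>. inner (pi s \<omega> $ i - pmu $ i) b) \<in> borel_measurable M"
        using comp_meas[OF piM[of s], of i] by measurable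
      have pint: "integrable M (\<lambda>\<omega>. inner (pi s \<omega> $ i - pmu $ i) b * inner (\<xi> i s \<omega>) b)"
      proof (rule Bochner_Integration.integrable_bound[OF Bint])
        show "(\<lambda>\<omega>. inner (pi s \<omega> $ i - pmu $ i) b * inner (\<xi> i s \<omega>) b) \<in> borel_measurable M"
          using YmM xbm by measurable
        show "AE \<omega> in M. norm (inner (pi s \<omega> $ i - pmu $ i) b * inner (\<xi> i s \<omega>) b) \<le> norm (B \<omega>)"
        proof (rule AE_I2)
          fix \<omega> assume \<omega>: "\<omega> \<in> space M"
          have nb1: "norm b = 1" using b by simp
          have "\<bar>inner (pi s \<omega> $ i - pmu $ i) b\<bar> \<le> norm (pi s \<omega> $ i - pmu $ i) * norm b" by (rule Cauchy_Schwarz_ineq2)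
          hence a1: "\<bar>inner (pi s \<omega> $ i - pmu $ i) b\<bar> \<le> 2 * K" using diff_bd[OF \<omega>, of s i] nb1 by simp
          have "\<bar>inner (\<xi> i s \<omega>) b\<bar> \<le> norm (\<xi> i s \<omega>) * norm b" by (rule Cauchy_Schwarz_ineq2)
          hence a2: "\<bar>inner (\<xi> i s \<omega>) b\<bar> \<le> 1 + (norm (\<xi> i s \<omega>))\<^sup>2" using nb[of \<omega>] nb1 by simp
          have "\<bar>inner (pi s \<omega> $ i - pmu $ i) b * inner (\<xi> i s \<omega>) b\<bar> \<le> 2 * K * (1 + (norm (\<xi> i s \<omega>))\<^sup>2)"
            unfolding abs_mult using a1 a2 K0 by (intro mult_mono) auto
          thus "norm (inner (pi s \<omega> $ i - pmu $ i) b * inner (\<xi> i s \<omega>) b) \<le> norm (B \<omega>)"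
            unfolding B_def using K0 by simp
        qed
      qed
      have "(\<integral>\<omega>. inner (pi s \<omega> $ i - pmu $ i) b * inner (\<xi> i s \<omega>) b \<partial>M)
          = (\<integral>\<omega>. inner (pi s \<omega> $ i - pmu $ i) b * real_cond_exp M (F s) (\<lambda>\<omega>. inner (\<xi> i s \<omega>) b) \<omega> \<partial>M)"
        by (rule SFs.real_cond_exp_intg(2)[OF pint Ym xbm, symmetric])
      also have "\<dots> = (\<integral>\<omega>. 0 \<partial>M)"
      proof (rule integral_cong_AE)
        show "(\<lambda>\<omega>. inner (pi s \<omega> $ i - pmu $ i) b * real_cond_exp M (F s) (\<lambda>\<omega>. inner (\<xi> i s \<omega>) b) \<omega>) \<in> borel_measurable M"
          using YmM by measurable
        show "(\<lambda>\<omega>. 0::real) \<in> borel_measurable M" by simp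
        show "AE \<omega> in M. inner (pi s \<omega> $ i - pmu $ i) b * real_cond_exp M (F s) (\<lambda>\<omega>. inner (\<xi> i s \<omega>) b) \<omega> = 0"
          using noise_mean[where i=i and s=s, OF b] unfolding F_def[symmetric] by eventually_elim simp
      qed
      finally show ?thesis using pint by simp
    qed
    have eqs: "inner (\<xi> i s \<omega>) (pi s \<omega> $ i - pmu $ i) = (\<Sum>b\<in>Basis. inner (pi s \<omega> $ i - pmu $ i) b * inner (\<xi> i s \<omega>) b)" for \<omega>
      by (subst euclidean_inner) (simp add: mult.commute)
    have "integrable M (\<lambda>\<omega>. \<Sum>b\<in>Basis. inner (pi s \<omega> $ i - pmu $ i) b * inner (\<xi> i s \<omega>) b)"
      by (rule Bochner_Integration.integrable_sum) (use termb in blast)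
    moreover have "(\<integral>\<omega>. (\<Sum>b\<in>Basis. inner (pi s \<omega> $ i - pmu $ i) b * inner (\<xi> i s \<omega>) b) \<partial>M) = 0"
    proof -
      have "(\<integral>\<omega>. (\<Sum>b\<in>Basis. inner (pi s \<omega> $ i - pmu $ i) b * inner (\<xi> i s \<omega>) b) \<partial>M)
          = (\<Sum>b\<in>Basis. (\<integral>\<omega>. inner (pi s \<omega> $ i - pmu $ i) b * inner (\<xi> i s \<omega>) b \<partial>M))"
        by (rule Bochner_Integration.integral_sum) (use termb in blast)
      also have "\<dots> = 0" using termb by simp
      finally show ?thesis .
    qed
    ultimately show "integrable M (\<lambda>\<omega>. inner (\<xi> i s \<omega>) (pi s \<omega> $ i - pmu $ i))
      \<and> (\<integral>\<omega>. inner (\<xi> i s \<omega>) (pi s \<omega> $ i - pmu $ i) \<partial>M) = 0" unfolding eqs by simp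
  qed
  have Zint: "\<And>s. integrable M (Z s) \<and> (\<integral>\<omega>. Z s \<omega> \<partial>M) \<le> eta s / \<rho> * (real CARD('n) * C\<^sup>2)"
  proof -
    fix s
    have i1: "integrable M (\<lambda>\<omega>. \<Sum>i\<in>UNIV. inner (\<xi> i s \<omega>) (pi s \<omega> $ i - pmu $ i))"
      by (rule Bochner_Integration.integrable_sum) (use xi1 in blast)
    have i2: "integrable M (\<lambda>\<omega>. \<Sum>i\<in>UNIV. (norm (\<xi> i s \<omega>))\<^sup>2)"
      by (rule Bochner_Integration.integrable_sum) (use xi2 in blast)
    have zi: "integrable M (Z s)" unfolding Z_def using i1 i2 by (intro Bochner_Integration.integrable_add Bochner_Integration.integrable_mult_right)
    have "(\<integral>\<omega>. Z s \<omega> \<partial>M) = (\<integral>\<omega>. (\<Sum>i\<in>UNIV. inner (\<xi> i s \<omega>) (pi s \<omega> $ i - pmu $ i)) \<partial>M)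
        + eta s / \<rho> * (\<integral>\<omega>. (\<Sum>i\<in>UNIV. (norm (\<xi> i s \<omega>))\<^sup>2) \<partial>M)"
      unfolding Z_def using i1 i2 by (simp add: Bochner_Integration.integral_add)
    also have "(\<integral>\<omega>. (\<Sum>i\<in>UNIV. inner (\<xi> i s \<omega>) (pi s \<omega> $ i - pmu $ i)) \<partial>M) = 0"
    proof -
      have "(\<integral>\<omega>. (\<Sum>i\<in>UNIV. inner (\<xi> i s \<omega>) (pi s \<omega> $ i - pmu $ i)) \<partial>M)
          = (\<Sum>i\<in>UNIV. (\<integral>\<omega>. inner (\<xi> i s \<omega>) (pi s \<omega> $ i - pmu $ i) \<partial>M))"
        by (rule Bochner_Integration.integral_sum) (use xi1 in blast)
      also have "\<dots> = 0" using xi1 by simp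
      finally show ?thesis .
    qed
    also have "(\<integral>\<omega>. (\<Sum>i\<in>UNIV. (norm (\<xi> i s \<omega>))\<^sup>2) \<partial>M) = (\<Sum>i\<in>UNIV. (\<integral>\<omega>. (norm (\<xi> i s \<omega>))\<^sup>2 \<partial>M))"
      by (rule Bochner_Integration.integral_sum) (use xi2 in blast)
    finally have eqZ: "(\<integral>\<omega>. Z s \<omega> \<partial>M) = 0 + eta s / \<rho> * (\<Sum>i\<in>UNIV. (\<integral>\<omega>. (norm (\<xi> i s \<omega>))\<^sup>2 \<partial>M))" .
    have "(\<Sum>i\<in>UNIV. (\<integral>\<omega>. (norm (\<xi> i s \<omega>))\<^sup>2 \<partial>M)) \<le> (\<Sum>i\<in>(UNIV::'n set). C\<^sup>2)"
      using xi2 by (intro sum_mono) auto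
    also have "(\<Sum>i\<in>(UNIV::'n set). C\<^sup>2) = real CARD('n) * C\<^sup>2" by simp
    finally have "eta s / \<rho> * (\<Sum>i\<in>UNIV. (\<integral>\<omega>. (norm (\<xi> i s \<omega>))\<^sup>2 \<partial>M)) \<le> eta s / \<rho> * (real CARD('n) * C\<^sup>2)"
      using eta_pos[of s] rho_pos by (intro mult_left_mono) auto
    hence "(\<integral>\<omega>. Z s \<omega> \<partial>M) \<le> eta s / \<rho> * (real CARD('n) * C\<^sup>2)" unfolding eqZ by simp
    thus "integrable M (Z s) \<and> (\<integral>\<omega>. Z s \<omega> \<partial>M) \<le> eta s / \<rho> * (real CARD('n) * C\<^sup>2)" using zi by simp
  qed
  define D0 where "D0 = bregman_prof psi dpsi pmu pi0"
  define R where "R = (\<lambda>\<omega>. (W 0 * D0 + (\<Sum>s<Suc t. Z s \<omega>)) / W (Suc t))"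
  have WS: "W (Suc t) = kappa * real t + 2 * theta" unfolding W_def by (simp add: algebra_simps)
  have W0: "W 0 = 2 * theta - kappa" unfolding W_def by simp
  have Wpos: "W (Suc t) > 0" unfolding WS using den_pos by simp
  have Dnn: "\<And>\<omega>. \<omega> \<in> space M \<Longrightarrow> 0 \<le> bregman_prof psi dpsi pmu (pi (Suc t) \<omega>)"
  proof -
    fix \<omega> assume \<omega>: "\<omega> \<in> space M"
    show "0 \<le> bregman_prof psi dpsi pmu (pi (Suc t) \<omega>)" unfolding bregman_prof_def
    proof (rule sum_nonneg)
      fix i
      have "0 \<le> \<rho> / 2 * (norm (pmu $ i - pi (Suc t) \<omega> $ i))\<^sup>2" using rho_pos by simp
      also have "\<dots> \<le> bregman psi dpsi (pmu $ i) (pi (Suc t) \<omega> $ i)"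
        using D_lb pmu_in pi_comp[OF \<omega>] unfolding profiles_def by blast
      finally show "0 \<le> bregman psi dpsi (pmu $ i) (pi (Suc t) \<omega> $ i)" .
    qed
  qed
  have DleR: "\<And>\<omega>. \<omega> \<in> space M \<Longrightarrow> bregman_prof psi dpsi pmu (pi (Suc t) \<omega>) \<le> R \<omega>"
  proof -
    fix \<omega> assume \<omega>: "\<omega> \<in> space M"
    have "W (Suc t) * bregman_prof psi dpsi pmu (pi (Suc t) \<omega>) \<le> W 0 * D0 + (\<Sum>s<Suc t. Z s \<omega>)"
      using unroll[OF \<omega>, of "Suc t"] unfolding D0_def .
    thus "bregman_prof psi dpsi pmu (pi (Suc t) \<omega>) \<le> R \<omega>"
      unfolding R_def using Wpos by (simp add: pos_le_divide_eq mult.commute)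
  qed
  have sZ: "integrable M (\<lambda>\<omega>. \<Sum>s<Suc t. Z s \<omega>)" by (rule Bochner_Integration.integrable_sum) (use Zint in blast)
  have Rint: "integrable M R" unfolding R_def using sZ by (intro Bochner_Integration.integrable_divide_zero Bochner_Integration.integrable_add) auto
  have intR: "(\<integral>\<omega>. R \<omega> \<partial>M) = (W 0 * D0 + (\<Sum>s<Suc t. (\<integral>\<omega>. Z s \<omega> \<partial>M))) / W (Suc t)"
  proof -
    have "(\<integral>\<omega>. R \<omega> \<partial>M) = (\<integral>\<omega>. W 0 * D0 + (\<Sum>s<Suc t. Z s \<omega>) \<partial>M) / W (Suc t)"
      unfolding R_def by (rule Bochner_Integration.integral_divide_zero)
    also have "(\<integral>\<omega>. W 0 * D0 + (\<Sum>s<Suc t. Z s \<omega>) \<partial>M) = W 0 * D0 + (\<integral>\<omega>. (\<Sum>s<Suc t. Z s \<omega>) \<partial>M)"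
      using sZ by (simp add: Bochner_Integration.integral_add P.prob_space)
    also have "(\<integral>\<omega>. (\<Sum>s<Suc t. Z s \<omega>) \<partial>M) = (\<Sum>s<Suc t. (\<integral>\<omega>. Z s \<omega> \<partial>M))"
      by (rule Bochner_Integration.integral_sum) (use Zint in blast)
    finally show ?thesis .
  qed
  have Sb: "(\<Sum>s<Suc t. (\<integral>\<omega>. Z s \<omega> \<partial>M)) \<le> real CARD('n) * C\<^sup>2 / \<rho> * (1 / kappa * ln (kappa / (2 * theta) * real t + 1) + 1 / (2 * theta))"
  proof -
    have "(\<Sum>s<Suc t. (\<integral>\<omega>. Z s \<omega> \<partial>M)) \<le> (\<Sum>s<Suc t. eta s / \<rho> * (real CARD('n) * C\<^sup>2))"
      using Zint by (intro sum_mono) auto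
    also have "\<dots> = real CARD('n) * C\<^sup>2 / \<rho> * (\<Sum>s\<le>t. 1 / (kappa * real s + 2 * theta))"
      unfolding eta_def lessThan_Suc_atMost[symmetric] sum_distrib_left by (intro sum.cong) auto
    also have "\<dots> \<le> real CARD('n) * C\<^sup>2 / \<rho> * (1 / (2 * theta) + 1 / kappa * ln (kappa / (2 * theta) * real t + 1))"
      using log_sum_bound[OF kappa_pos, of "2 * theta" t] theta_pos rho_pos by (intro mult_left_mono) auto
    finally show ?thesis by (simp add: algebra_simps)
  qed
  have finalR: "(\<integral>\<omega>. R \<omega> \<partial>M) \<le> (2 * theta - kappa) / (kappa * real t + 2 * theta) * bregman_prof psi dpsi pmu pi0
        + real CARD('n) * C\<^sup>2 / (\<rho> * (kappa * real t + 2 * theta))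
          * (1 / kappa * ln (kappa / (2 * theta) * real t + 1) + 1 / (2 * theta))"
  proof -
    have "(\<integral>\<omega>. R \<omega> \<partial>M) \<le> (W 0 * D0 + real CARD('n) * C\<^sup>2 / \<rho> * (1 / kappa * ln (kappa / (2 * theta) * real t + 1) + 1 / (2 * theta))) / W (Suc t)"
      unfolding intR using Sb Wpos by (intro divide_right_mono) auto
    also have "\<dots> = (2 * theta - kappa) / (kappa * real t + 2 * theta) * bregman_prof psi dpsi pmu pi0
        + real CARD('n) * C\<^sup>2 / (\<rho> * (kappa * real t + 2 * theta))
          * (1 / kappa * ln (kappa / (2 * theta) * real t + 1) + 1 / (2 * theta))"
      unfolding W0 WS D0_def using rho_pos den_pos[of t] by (intro final_alg) auto
    finally show ?thesis .
  qed
  have "(\<integral>\<^sup>+ \<omega>. ennreal (bregman_prof psi dpsi pmu (pi (Suc t) \<omega>)) \<partial>M) \<le> (\<integral>\<^sup>+ \<omega>. ennreal (R \<omega>) \<partial>M)"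
    using DleR by (intro nn_integral_mono ennreal_leI) auto
  also have "\<dots> = ennreal (\<integral>\<omega>. R \<omega> \<partial>M)"
  proof (rule nn_integral_eq_integral[OF Rint])
    show "AE \<omega> in M. 0 \<le> R \<omega>" using DleR Dnn by (intro AE_I2) (meson order_trans)
  qed
  also have "\<dots> \<le> ennreal ((2 * theta - kappa) / (kappa * real t + 2 * theta) * bregman_prof psi dpsi pmu pi0
        + real CARD('n) * C\<^sup>2 / (\<rho> * (kappa * real t + 2 * theta))
          * (1 / kappa * ln (kappa / (2 * theta) * real t + 1) + 1 / (2 * theta)))"
    using finalR by (rule ennreal_leI)
  finally show ?thesis .
qed

end
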